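(* Let $\boldsymbol{x}$ be a random vector in $\mathbb{R}^n$ with $\mathbb{E}\|\boldsymbol{x}\|^2<\infty$ and let $\boldsymbol{A}\in\mathbb{R}^{m\times n}$ be a random matrix independent of $\boldsymbol{x}$, with $\mathbb{E}\|\boldsymbol{A}^\top\boldsymbol{A}\|<\infty$; measurements are noiseless, $\boldsymbol{y}=\boldsymbol{A}\boldsymbol{x}$. Let a random subset $S$ of the row indices $\{1,\dots,m\}$ be drawn from a distribution depending only on $\boldsymbol{A}$ (conditionally independent of $\boldsymbol{x}$ given $\boldsymbol{A}$), and set $\boldsymbol{A}_1=$ rows of $\boldsymbol{A}$ indexed by $S$, $\boldsymbol{y}_1=\boldsymbol{A}_1\boldsymbol{x}$ (rows of $\boldsymbol{y}$ indexed by $S$). For a measurable $f(\boldsymbol{y}_1,\boldsymbol{A}_1)\in\mathbb{R}^n$ with the relevant second moments finite, define $$\mathcal{L}_{\mathrm{MSPLIT}}(\boldsymbol{y},\boldsymbol{A},f)=\mathbb{E}_{\boldsymbol{y}_1,\boldsymbol{A}_1|\boldsymbol{y},\boldsymbol{A}}\Big[\tfrac1m\|\boldsymbol{A}f(\boldsymbol{y}_1,\boldsymbol{A}_1)-\boldsymbol{y}\|^2\Big],\qquad \boldsymbol{Q}_{\boldsymbol{A}_1}=\mathbb{E}_{\boldsymbol{A}|\boldsymbol{A}_1}[\boldsymbol{A}^\top\boldsymbol{A}].$$ Then $$\mathbb{E}_{\boldsymbol{y},\boldsymbol{A}}\big[\mathcal{L}_{\mathrm{MSPLIT}}(\boldsymbol{y},\boldsymbol{A},f)\big]=\mathbb{E}_{\boldsymbol{y}_1,\boldsymbol{A}_1,\boldsymbol{x}}\Big[\tfrac1m\big(f(\boldsymbol{y}_1,\boldsymbol{A}_1)-\boldsymbol{x}\big)^\top\boldsymbol{Q}_{\boldsymbol{A}_1}\big(f(\boldsymbol{y}_1,\boldsymbol{A}_1)-\boldsymbol{x}\big)\Big],$$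 and the global minimizers of this expected loss are exactly the functions of the form $$f^*(\boldsymbol{y}_1,\boldsymbol{A}_1)=\boldsymbol{Q}_{\boldsymbol{A}_1}^\dagger\boldsymbol{Q}_{\boldsymbol{A}_1}\mathbb{E}[\boldsymbol{x}\mid\boldsymbol{y}_1,\boldsymbol{A}_1]+(\boldsymbol{I}-\boldsymbol{Q}_{\boldsymbol{A}_1}^\dagger\boldsymbol{Q}_{\boldsymbol{A}_1})v(\boldsymbol{y}_1,\boldsymbol{A}_1)$$ (almost surely) for an arbitrary function $v$. In particular, if $\boldsymbol{Q}_{\boldsymbol{A}_1}$ is invertible almost surely, the unique minimizer is $\mathbb{E}[\boldsymbol{x}\mid\boldsymbol{y}_1,\boldsymbol{A}_1]$.
   Context: $\boldsymbol{Q}^\dagger$ denotes the Moore–Penrose pseudo-inverse; $\boldsymbol{Q}^\dagger\boldsymbol{Q}$ is the orthogonal projection onto the range of the symmetric matrix $\boldsymbol{Q}$. $\mathbb{E}_{\boldsymbol{u}|\boldsymbol{v}}$ denotes conditional expectation given $\boldsymbol{v}$. *)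

theory Defs
  imports "HOL-Probability.Probability"
begin

definition mp_pinv :: "real^'n^'n \<Rightarrow> real^'n^'n" where
  "mp_pinv Q = (THE B. Q ** B ** Q = Q \<and> B ** Q ** B = B \<and>
                        transpose (Q ** B) = Q ** B \<and> transpose (B ** Q) = B ** Q)"

definition gen_sigma :: "'w measure \<Rightarrow> ('w \<Rightarrow> 'a) \<Rightarrow> 'a measure \<Rightarrow> 'w measure" where
  "gen_sigma M X N = vimage_algebra (space M) X N"

definition vcond_exp :: "'w measure \<Rightarrow> 'w measure \<Rightarrow> ('w \<Rightarrow> real^'n) \<Rightarrow> 'w \<Rightarrow> real^'n" where
  "vcond_exp M F X = (\<lambda>\<omega>. \<chi> i. real_cond_exp M F (\<lambda>\<omega>'. X \<omega>' $ i) \<omega>)"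

definition mcond_exp :: "'w measure \<Rightarrow> 'w measure \<Rightarrow> ('w \<Rightarrow> real^'n^'k) \<Rightarrow> 'w \<Rightarrow> real^'n^'k" where
  "mcond_exp M F X = (\<lambda>\<omega>. \<chi> i j. real_cond_exp M F (\<lambda>\<omega>'. X \<omega>' $ i $ j) \<omega>)"

definition cond_indep :: "'w measure \<Rightarrow> ('w \<Rightarrow> 'a) \<Rightarrow> 'a measure \<Rightarrow> ('w \<Rightarrow> 'b) \<Rightarrow> 'b measure
     \<Rightarrow> 'w measure \<Rightarrow> bool" where
  "cond_indep M X MX Y MY F \<longleftrightarrow>
     (\<forall>B\<in>sets MX. \<forall>C\<in>sets MY. AE \<omega> in M.
        real_cond_exp M F (\<lambda>\<omega>'. indicator B (X \<omega>') * indicator C (Y \<omega>')) \<omega>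
        = real_cond_exp M F (\<lambda>\<omega>'. indicator B (X \<omega>')) \<omega> *
          real_cond_exp M F (\<lambda>\<omega>'. indicator C (Y \<omega>')) \<omega>)"

definition indep_rv :: "'w measure \<Rightarrow> ('w \<Rightarrow> 'a) \<Rightarrow> 'a measure \<Rightarrow> ('w \<Rightarrow> 'b) \<Rightarrow> 'b measure \<Rightarrow> bool" where
  "indep_rv M X MX Y MY \<longleftrightarrow>
     (\<forall>B\<in>sets MX. \<forall>C\<in>sets MY.
        measure M ({\<omega>\<in>space M. X \<omega> \<in> B} \<inter> {\<omega>\<in>space M. Y \<omega> \<in> C})
        = measure M {\<omega>\<in>space M. X \<omega> \<in> B} * measure M {\<omega>\<in>space M. Y \<omega> \<in> C})"

definition row_select :: "'m set \<Rightarrow> 'a::zero^'m \<Rightarrow> 'a^'m" where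
  "row_select S v = (\<chi> i. if i \<in> S then v $ i else 0)"

definition obs_space :: "('m::finite set \<times> ((real^'m) \<times> (real^'n^'m))) measure" where
  "obs_space = count_space UNIV \<Otimes>\<^sub>M borel"

definition obs :: "('w \<Rightarrow> real^'n) \<Rightarrow> ('w \<Rightarrow> real^'n^'m) \<Rightarrow> ('w \<Rightarrow> 'm set) \<Rightarrow> 'w
    \<Rightarrow> 'm set \<times> ((real^'m) \<times> (real^'n^'m))" where
  "obs x A S = (\<lambda>\<omega>. (S \<omega>, row_select (S \<omega>) (A \<omega> *v x \<omega>), row_select (S \<omega>) (A \<omega>)))"

text \<open>sigma(A_1) (with the index set S), sigma(y_1, A_1), sigma(y, A).\<close>
definition F_A1 :: "'w measure \<Rightarrow> ('w \<Rightarrow> real^'n^'m) \<Rightarrow> ('w \<Rightarrow> 'm::finite set) \<Rightarrow> 'w measure" where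
  "F_A1 M A S = gen_sigma M (\<lambda>\<omega>. (S \<omega>, row_select (S \<omega>) (A \<omega>))) (count_space UNIV \<Otimes>\<^sub>M borel)"

definition F_obs :: "'w measure \<Rightarrow> ('w \<Rightarrow> real^'n) \<Rightarrow> ('w \<Rightarrow> real^'n^'m) \<Rightarrow> ('w \<Rightarrow> 'm::finite set) \<Rightarrow> 'w measure" where
  "F_obs M x A S = gen_sigma M (obs x A S) obs_space"

definition F_yA :: "'w measure \<Rightarrow> ('w \<Rightarrow> real^'n) \<Rightarrow> ('w \<Rightarrow> real^'n^'m) \<Rightarrow> 'w measure" where
  "F_yA M x A = gen_sigma M (\<lambda>\<omega>. (A \<omega> *v x \<omega>, A \<omega>)) borel"

definition Qmat :: "'w measure \<Rightarrow> ('w \<Rightarrow> real^'n^'m) \<Rightarrow> ('w \<Rightarrow> 'm::finite set) \<Rightarrow> 'w \<Rightarrow> real^'n^'n" where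
  "Qmat M A S = mcond_exp M (F_A1 M A S) (\<lambda>\<omega>. transpose (A \<omega>) ** A \<omega>)"

definition msplit_loss :: "'w measure \<Rightarrow> ('w \<Rightarrow> real^'n) \<Rightarrow> ('w \<Rightarrow> real^'n^'m) \<Rightarrow> ('w \<Rightarrow> 'm::finite set)
    \<Rightarrow> ('m set \<times> ((real^'m) \<times> (real^'n^'m)) \<Rightarrow> real^'n) \<Rightarrow> 'w \<Rightarrow> real" where
  "msplit_loss M x A S f = real_cond_exp M (F_yA M x A)
     (\<lambda>\<omega>. (1 / real CARD('m)) * (norm (A \<omega> *v f (obs x A S \<omega>) - A \<omega> *v x \<omega>))\<^sup>2)"

definition exp_msplit_loss :: "'w measure \<Rightarrow> ('w \<Rightarrow> real^'n) \<Rightarrow> ('w \<Rightarrow> real^'n^'m) \<Rightarrow> ('w \<Rightarrow> 'm::finite set)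
    \<Rightarrow> ('m set \<times> ((real^'m) \<times> (real^'n^'m)) \<Rightarrow> real^'n) \<Rightarrow> real" where
  "exp_msplit_loss M x A S f = (\<integral>\<omega>. msplit_loss M x A S f \<omega> \<partial>M)"

definition admissible :: "'w measure \<Rightarrow> ('w \<Rightarrow> real^'n) \<Rightarrow> ('w \<Rightarrow> real^'n^'m) \<Rightarrow> ('w \<Rightarrow> 'm::finite set)
    \<Rightarrow> ('m set \<times> ((real^'m) \<times> (real^'n^'m)) \<Rightarrow> real^'n) \<Rightarrow> bool" where
  "admissible M x A S f \<longleftrightarrow> f \<in> borel_measurable obs_space
     \<and> integrable M (\<lambda>\<omega>. (norm (f (obs x A S \<omega>)))\<^sup>2)
     \<and> integrable M (\<lambda>\<omega>. (norm (A \<omega> *v f (obs x A S \<omega>) - A \<omega> *v x \<omega>))\<^sup>2)"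

definition is_global_minimizer :: "'w measure \<Rightarrow> ('w \<Rightarrow> real^'n) \<Rightarrow> ('w \<Rightarrow> real^'n^'m) \<Rightarrow> ('w \<Rightarrow> 'm::finite set)
    \<Rightarrow> ('m set \<times> ((real^'m) \<times> (real^'n^'m)) \<Rightarrow> real^'n) \<Rightarrow> bool" where
  "is_global_minimizer M x A S f \<longleftrightarrow> admissible M x A S f \<and>
     (\<forall>g. admissible M x A S g \<longrightarrow> exp_msplit_loss M x A S f \<le> exp_msplit_loss M x A S g)"

end

theory Submission
  imports Defs
begin


lemma bm_vec_nth[measurable]:
  "(\<lambda>v::'a::euclidean_space^'n. v $ i) \<in> borel_measurable borel"
  by (intro borel_measurable_continuous_onI linear_continuous_on bounded_linear_vec_nth)

lemma bm_vec_nth'[measurable (raw)]: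
  fixes f :: "'b \<Rightarrow> 'a::euclidean_space^'n"
  shows "f \<in> borel_measurable M \<Longrightarrow> (\<lambda>x. f x $ i) \<in> borel_measurable M"
  using measurable_compose[OF _ bm_vec_nth] by blast

lemma bm_vecI:
  fixes f :: "'b \<Rightarrow> 'a::euclidean_space^'n"
  assumes "\<And>i. (\<lambda>\<omega>. f \<omega> $ i) \<in> borel_measurable M"
  shows "f \<in> borel_measurable M"
proof (subst borel_measurable_euclidean_space, intro ballI)
  fix b :: "'a^'n" assume "b \<in> Basis"
  then obtain i u where b: "b = axis i u" and u: "u \<in> Basis" by (auto simp: Basis_vec_def)
  have "(\<lambda>\<omega>. f \<omega> $ i \<bullet> u) \<in> borel_measurable M"
    using assms[of i] by measurable
  then show "(\<lambda>\<omega>. f \<omega> \<bullet> b) \<in> borel_measurable M" by (simp add: b inner_axis)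
qed

lemma bm_vec_lambda[measurable (raw)]:
  fixes f :: "'n::finite \<Rightarrow> 'b \<Rightarrow> 'a::euclidean_space"
  assumes "\<And>i. f i \<in> borel_measurable M"
  shows "(\<lambda>\<omega>. \<chi> i. f i \<omega>) \<in> borel_measurable M"
  by (rule bm_vecI) (simp add: assms)

lemma bm_mv[measurable (raw)]:
  fixes a :: "'b \<Rightarrow> real^'n^'m" and v :: "'b \<Rightarrow> real^'n"
  assumes "a \<in> borel_measurable M" "v \<in> borel_measurable M"
  shows "(\<lambda>\<omega>. a \<omega> *v v \<omega>) \<in> borel_measurable M"
  unfolding matrix_vector_mult_def using assms by measurable

lemma bm_mm[measurable (raw)]:
  fixes a :: "'b \<Rightarrow> real^'n^'m" and b :: "'b \<Rightarrow> real^'k^'n"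
  assumes "a \<in> borel_measurable M" "b \<in> borel_measurable M"
  shows "(\<lambda>\<omega>. a \<omega> ** b \<omega>) \<in> borel_measurable M"
  unfolding matrix_matrix_mult_def using assms by measurable

lemma bm_transpose[measurable (raw)]:
  fixes a :: "'b \<Rightarrow> real^'n^'m"
  assumes "a \<in> borel_measurable M"
  shows "(\<lambda>\<omega>. transpose (a \<omega>)) \<in> borel_measurable M"
  unfolding transpose_def using assms by measurable

lemma row_select_mv: "row_select s (a *v v) = row_select s a *v v"
  by (simp add: row_select_def vec_eq_iff matrix_vector_mult_def)

lemma bm_row_select[measurable (raw)]:
  fixes a :: "'b \<Rightarrow> 'a::euclidean_space^'m"
  assumes "a \<in> borel_measurable M" "s \<in> measurable M (count_space UNIV)"
  shows "(\<lambda>\<omega>. row_select (s \<omega>) (a \<omega>)) \<in> borel_measurable M"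
proof -
  have "(\<lambda>\<omega>. row_select t (a \<omega>)) \<in> borel_measurable M" for t
    unfolding row_select_def using assms(1) by measurable
  then show ?thesis
    using measurable_compose_countable[where f="\<lambda>t \<omega>. row_select t (a \<omega>)" and g=s] assms(2)
    by blast
qed


lemma DD_enn:
  fixes f :: "'a \<Rightarrow> ennreal"
  assumes X: "X \<in> \<Omega> \<rightarrow> space N" and f: "f \<in> borel_measurable (vimage_algebra \<Omega> X N)"
  shows "\<exists>h\<in>borel_measurable N. \<forall>\<omega>\<in>\<Omega>. f \<omega> = h (X \<omega>)"
  using f
proof (induct rule: borel_measurable_induct)
  case (cong f g)
  then show ?case by auto
next
  case (set A)
  then obtain B where B: "B \<in> sets N" "A = X -` B \<inter> \<Omega>"
    using sets_vimage_algebra2[OF X] by auto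
  show ?case
  proof (rule bexI[where x="indicator B"])
    show "indicator B \<in> borel_measurable N" using B(1) by (rule borel_measurable_indicator)
    show "\<forall>\<omega>\<in>\<Omega>. indicator A \<omega> = (indicator B (X \<omega>) :: ennreal)" by (auto simp: B indicator_def)
  qed
next
  case (mult u c)
  from \<open>\<exists>h\<in>borel_measurable N. \<forall>\<omega>\<in>\<Omega>. u \<omega> = h (X \<omega>)\<close>
  obtain h where "h \<in> borel_measurable N" "\<forall>\<omega>\<in>\<Omega>. u \<omega> = h (X \<omega>)" by blast
  then show ?case by (intro bexI[where x="\<lambda>z. c * h z"]) auto
next
  case (add u v)
  from \<open>\<exists>h\<in>borel_measurable N. \<forall>\<omega>\<in>\<Omega>. u \<omega> = h (X \<omega>)\<close>
  obtain h where "h \<in> borel_measurable N" "\<forall>\<omega>\<in>\<Omega>. u \<omega> = h (X \<omega>)" by blast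
  moreover from \<open>\<exists>h\<in>borel_measurable N. \<forall>\<omega>\<in>\<Omega>. v \<omega> = h (X \<omega>)\<close>
  obtain g where "g \<in> borel_measurable N" "\<forall>\<omega>\<in>\<Omega>. v \<omega> = g (X \<omega>)" by blast
  ultimately show ?case by (intro bexI[where x="\<lambda>z. g z + h z"]) auto
next
  case (seq U)
  from seq(3) have "\<forall>i. \<exists>h\<in>borel_measurable N. \<forall>\<omega>\<in>\<Omega>. U i \<omega> = h (X \<omega>)" by auto
  then obtain h where h: "\<And>i. h i \<in> borel_measurable N" "\<And>i \<omega>. \<omega>\<in>\<Omega> \<Longrightarrow> U i \<omega> = h i (X \<omega>)"
    by metis
  show ?case
    by (rule bexI[where x="\<lambda>z. SUP i. h i z"]) (use h in \<open>auto simp: image_comp o_def\<close>)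
qed

lemma enn2real_ennreal_max: "enn2real (ennreal r) = max r 0"
  by (cases "r \<ge> 0") (auto simp: ennreal_neg)

lemma DD_real:
  fixes f :: "'a \<Rightarrow> real"
  assumes X: "X \<in> \<Omega> \<rightarrow> space N" and f: "f \<in> borel_measurable (vimage_algebra \<Omega> X N)"
  shows "\<exists>h\<in>borel_measurable N. \<forall>\<omega>\<in>\<Omega>. f \<omega> = h (X \<omega>)"
proof -
  obtain h1 where h1: "h1 \<in> borel_measurable N" "\<forall>\<omega>\<in>\<Omega>. ennreal (f \<omega>) = h1 (X \<omega>)"
    using DD_enn[OF X, of "\<lambda>\<omega>. ennreal (f \<omega>)"] f by auto
  obtain h2 where h2: "h2 \<in> borel_measurable N" "\<forall>\<omega>\<in>\<Omega>. ennreal (- f \<omega>) = h2 (X \<omega>)"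
    using DD_enn[OF X, of "\<lambda>\<omega>. ennreal (- f \<omega>)"] f by auto
  have "f \<omega> = enn2real (h1 (X \<omega>)) - enn2real (h2 (X \<omega>))" if "\<omega> \<in> \<Omega>" for \<omega>
  proof -
    have a: "enn2real (h1 (X \<omega>)) = max (f \<omega>) 0" using h1(2) that by (metis enn2real_ennreal_max)
    have b: "enn2real (h2 (X \<omega>)) = max (- f \<omega>) 0" using h2(2) that by (metis enn2real_ennreal_max)
    show ?thesis unfolding a b by linarith
  qed
  then show ?thesis
    by (intro bexI[where x="\<lambda>z. enn2real (h1 z) - enn2real (h2 z)"]) (use h1 h2 in \<open>auto intro!: borel_measurable_diff borel_measurable_enn2real\<close>)
qed

lemma DD_vec:
  fixes f :: "'a \<Rightarrow> 'b::euclidean_space^'n"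
  assumes "\<And>i. \<exists>h\<in>borel_measurable N. \<forall>\<omega>\<in>\<Omega>. f \<omega> $ i = h (X \<omega>)"
  shows "\<exists>h\<in>borel_measurable N. \<forall>\<omega>\<in>\<Omega>. f \<omega> = h (X \<omega>)"
proof -
  obtain h where h: "\<And>i. h i \<in> borel_measurable N" "\<And>i \<omega>. \<omega>\<in>\<Omega> \<Longrightarrow> f \<omega> $ i = h i (X \<omega>)"
    using assms by metis
  show ?thesis
    by (rule bexI[where x="\<lambda>z. \<chi> i. h i z"]) (auto simp: vec_eq_iff h intro!: bm_vec_lambda)
qed

lemma DD_rvec:
  fixes f :: "'a \<Rightarrow> real^'n"
  assumes X: "X \<in> \<Omega> \<rightarrow> space N" and f: "f \<in> borel_measurable (vimage_algebra \<Omega> X N)"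
  shows "\<exists>h\<in>borel_measurable N. \<forall>\<omega>\<in>\<Omega>. f \<omega> = h (X \<omega>)"
  by (rule DD_vec, rule DD_real[OF X]) (use f in measurable)

lemma DD_rmat:
  fixes f :: "'a \<Rightarrow> real^'n^'m"
  assumes X: "X \<in> \<Omega> \<rightarrow> space N" and f: "f \<in> borel_measurable (vimage_algebra \<Omega> X N)"
  shows "\<exists>h\<in>borel_measurable N. \<forall>\<omega>\<in>\<Omega>. f \<omega> = h (X \<omega>)"
  by (rule DD_vec, rule DD_rvec[OF X]) (use f in measurable)


definition penrose :: "real^'n^'n \<Rightarrow> real^'n^'n \<Rightarrow> bool" where
  "penrose Q B \<longleftrightarrow> Q ** B ** Q = Q \<and> B ** Q ** B = B \<and>
                        transpose (Q ** B) = Q ** B \<and> transpose (B ** Q) = B ** Q"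

lemma penrose_unique:
  assumes "penrose Q B" "penrose Q C" shows "B = C"
proof -
  let ?T = transpose
  have B1: "Q ** B ** Q = Q" and B2: "B ** Q ** B = B" and B3: "?T (Q ** B) = Q ** B" and B4: "?T (B ** Q) = B ** Q"
    using assms(1) by (auto simp: penrose_def)
  have C1: "Q ** C ** Q = Q" and C2: "C ** Q ** C = C" and C3: "?T (Q ** C) = Q ** C" and C4: "?T (C ** Q) = C ** Q"
    using assms(2) by (auto simp: penrose_def)
  have TQ: "?T Q = ?T Q ** ?T C ** ?T Q"
    by (metis C1 matrix_transpose_mul matrix_mul_assoc)
  have TQ': "?T Q = ?T Q ** ?T B ** ?T Q"
    by (metis B1 matrix_transpose_mul matrix_mul_assoc)
  have "B = B ** (Q ** B)" using B2 by (simp add: matrix_mul_assoc)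
  also have "\<dots> = B ** (?T B ** ?T Q)" by (metis B3 matrix_transpose_mul)
  also have "\<dots> = B ** (?T B ** (?T Q ** ?T C ** ?T Q))" using TQ by simp
  also have "\<dots> = B ** ((?T B ** ?T Q) ** (?T C ** ?T Q))" by (simp add: matrix_mul_assoc)
  also have "\<dots> = B ** ((Q ** B) ** (Q ** C))" by (metis B3 C3 matrix_transpose_mul)
  also have "\<dots> = (B ** Q ** B) ** Q ** C" by (simp add: matrix_mul_assoc)
  also have "\<dots> = B ** Q ** C" using B2 by simp
  finally have b: "B = B ** Q ** C" .
  have "C = (C ** Q) ** C" using C2 by simp
  also have "\<dots> = (?T Q ** ?T C) ** C" by (metis C4 matrix_transpose_mul)
  also have "\<dots> = ((?T Q ** ?T B ** ?T Q) ** ?T C) ** C" using TQ' by simp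
  also have "\<dots> = ((?T Q ** ?T B) ** (?T Q ** ?T C)) ** C" by (simp add: matrix_mul_assoc)
  also have "\<dots> = ((B ** Q) ** (C ** Q)) ** C" by (metis B4 C4 matrix_transpose_mul)
  also have "\<dots> = B ** Q ** (C ** Q ** C)" by (simp add: matrix_mul_assoc)
  also have "\<dots> = B ** Q ** C" using C2 by simp
  finally have c: "C = B ** Q ** C" .
  show ?thesis using b c by simp
qed

lemma transpose_diff: "transpose (X - Y) = transpose X - transpose (Y::real^'n^'m)"
  by (simp add: vec_eq_iff transpose_def)

lemma inner_mv_transpose: "u \<bullet> (X *v v) = (transpose X *v u) \<bullet> (v::real^'n)"
  by (simp add: dot_lmul_matrix)

lemma matrix_sub_ldistrib': "X ** (Y - Z) = X ** Y - X ** (Z::real^'n^'n)"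
  by (simp add: matrix_eq matrix_vector_mul_assoc[symmetric] matrix_vector_mult_diff_rdistrib matrix_vector_mult_diff_distrib)

lemma matrix_sub_rdistrib': "(Y - Z) ** X = Y ** X - Z ** (X::real^'n^'n)"
  by (simp add: matrix_eq matrix_vector_mul_assoc[symmetric] matrix_vector_mult_diff_rdistrib)

lemma matrix_add_rdistrib': "(Y + Z) ** X = Y ** X + Z ** (X::real^'n^'n)"
  by (simp add: matrix_eq matrix_vector_mul_assoc[symmetric] matrix_vector_mult_add_rdistrib)

lemma penrose_exists:
  fixes Q :: "real^'n^'n"
  assumes sym: "transpose Q = Q"
  shows "\<exists>B. penrose Q B"
proof -
  define N where "N = {v::real^'n. Q *v v = 0}"
  have "subspace N"
    by (auto simp: N_def subspace_def matrix_vector_right_distrib matrix_vector_mult_scaleR)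
  then obtain Bs where Bs: "Bs \<subseteq> N" "pairwise orthogonal Bs" "\<And>x. x \<in> Bs \<Longrightarrow> norm x = 1"
      "independent Bs" "span Bs = N"
    by (rule orthonormal_basis_subspace) auto
  have fin: "finite Bs" using Bs(4) by (rule finiteI_independent)
  define PN :: "real^'n^'n" where "PN = (\<chi> i j. \<Sum>b\<in>Bs. b $ i * b $ j)"
  have PN_apply: "PN *v v = (\<Sum>b\<in>Bs. (b \<bullet> v) *\<^sub>R b)" for v
    by (simp add: vec_eq_iff PN_def matrix_vector_mult_def inner_vec_def sum_component
        sum_distrib_left sum_distrib_right mult_ac sum.swap[of _ Bs])
  have PN_base: "PN *v c = c" if "c \<in> Bs" for c
  proof -
    have "(\<Sum>b\<in>Bs. (b \<bullet> c) *\<^sub>R b) = (\<Sum>b\<in>{c}. (b \<bullet> c) *\<^sub>R b)"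
    proof (rule sum.mono_neutral_right[OF fin])
      show "{c} \<subseteq> Bs" using that by auto
      show "\<forall>i\<in>Bs - {c}. (i \<bullet> c) *\<^sub>R i = 0"
        using Bs(2) that by (auto simp: pairwise_def orthogonal_def)
    qed
    also have "\<dots> = c" using Bs(3)[OF that] by (simp add: dot_square_norm)
    finally show ?thesis by (simp add: PN_apply)
  qed
  have PN_span: "PN *v v = v" if "v \<in> span Bs" for v
  proof -
    have "subspace {a. PN *v a = a}"
      by (auto simp: subspace_def matrix_vector_right_distrib matrix_vector_mult_scaleR)
    then show ?thesis using span_induct[OF that, of "\<lambda>a. PN *v a = a"] PN_base by auto
  qed
  have PN_in: "PN *v v \<in> span Bs" for v
    unfolding PN_apply by (intro span_sum span_mul span_base) 
  have QPN: "Q ** PN = 0"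
    unfolding matrix_eq
  proof
    fix v
    have "PN *v v \<in> N" using PN_in Bs(5) by auto
    then show "(Q ** PN) *v v = 0 *v v" by (simp add: N_def matrix_vector_mul_assoc[symmetric])
  qed
  have PNQ: "PN ** Q = 0"
    unfolding matrix_eq
  proof
    fix v
    have "b \<bullet> (Q *v v) = 0" if "b \<in> Bs" for b
    proof -
      have "Q *v b = 0" using that Bs(1) by (auto simp: N_def)
      then show ?thesis by (simp add: inner_mv_transpose sym)
    qed
    then show "(PN ** Q) *v v = 0 *v v"
      by (simp add: matrix_vector_mul_assoc[symmetric] PN_apply)
  qed
  have PNPN: "PN ** PN = PN"
    unfolding matrix_eq by (simp add: matrix_vector_mul_assoc[symmetric] PN_span PN_in)
  have TPN: "transpose PN = PN"
    by (simp add: vec_eq_iff transpose_def PN_def mult.commute)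
  define M' where "M' = Q + PN"
  have inj: "\<forall>v. M' *v v = 0 \<longrightarrow> v = 0"
  proof (intro allI impI)
    fix v assume "M' *v v = 0"
    then have "PN *v (M' *v v) = 0" by simp
    then have "(PN ** Q) *v v + (PN ** PN) *v v = 0"
      by (simp add: M'_def matrix_vector_mult_add_rdistrib matrix_vector_right_distrib matrix_vector_mul_assoc)
    then have p: "PN *v v = 0" by (simp add: PNQ PNPN)
    with \<open>M' *v v = 0\<close> have "Q *v v = 0" by (simp add: M'_def matrix_vector_mult_add_rdistrib)
    then have "v \<in> span Bs" using Bs(5) by (simp add: N_def)
    then show "v = 0" using PN_span p by metis
  qed
  then obtain Bi where Bi1: "Bi ** M' = mat 1"
    using matrix_left_invertible_ker by blast
  then have Bi2: "M' ** Bi = mat 1" using matrix_left_right_inverse by blast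
  have M'PN: "M' ** PN = PN" by (simp add: M'_def matrix_add_rdistrib' QPN PNPN)
  have PNM': "PN ** M' = PN" by (simp add: M'_def matrix_add_ldistrib PNQ PNPN)
  have BiPN: "Bi ** PN = PN" by (metis Bi1 M'PN matrix_mul_assoc matrix_mul_lid)
  have PNBi: "PN ** Bi = PN" by (metis Bi2 PNM' matrix_mul_assoc matrix_mul_rid)
  have QM: "Q = M' - PN" by (simp add: M'_def)
  have QBi: "Q ** Bi = mat 1 - PN" by (simp add: QM matrix_sub_rdistrib' Bi2 PNBi)
  have BiQ: "Bi ** Q = mat 1 - PN" by (simp add: QM matrix_sub_ldistrib' Bi1 BiPN)
  define B where "B = Bi - PN"
  have QB: "Q ** B = mat 1 - PN" by (simp add: B_def matrix_sub_ldistrib' QBi QPN)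
  have BQ: "B ** Q = mat 1 - PN" by (simp add: B_def matrix_sub_rdistrib' BiQ PNQ)
  have "penrose Q B"
    unfolding penrose_def
  proof (intro conjI)
    show "Q ** B ** Q = Q" by (simp add: QB matrix_sub_rdistrib' PNQ)
    have PNB: "PN ** B = 0" by (simp add: B_def matrix_sub_ldistrib' PNBi PNPN)
    have "B ** Q ** B = (mat 1 - PN) ** B" using BQ by simp
    also have "\<dots> = B - PN ** B" by (simp add: matrix_sub_rdistrib')
    finally show "B ** Q ** B = B" using PNB by simp
    show "transpose (Q ** B) = Q ** B" by (simp add: QB transpose_diff TPN)
    show "transpose (B ** Q) = B ** Q" by (simp add: BQ transpose_diff TPN)
  qed
  then show ?thesis by blast
qed

lemma mp_pinv_penrose:
  assumes "transpose Q = Q" shows "penrose Q (mp_pinv Q)"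
proof -
  have "\<exists>!B. penrose Q B" using penrose_exists[OF assms] penrose_unique by blast
  then show ?thesis unfolding mp_pinv_def penrose_def[symmetric] by (rule theI')
qed

lemma mp_pinv_QPQ:
  assumes "transpose Q = Q" shows "Q ** mp_pinv Q ** Q = Q"
  using mp_pinv_penrose[OF assms] by (simp add: penrose_def)

lemma mp_pinv_inv:
  assumes "transpose Q = Q" "invertible Q" shows "mp_pinv Q ** Q = mat 1"
proof -
  obtain Qi where Qi: "Qi ** Q = mat 1" using assms(2) invertible_left_inverse by blast
  have "Qi ** (Q ** mp_pinv Q ** Q) = Qi ** Q" using mp_pinv_QPQ[OF assms(1)] by simp
  then show ?thesis by (simp add: matrix_mul_assoc Qi)
qed


lemma (in prob_space) sfs_vimage:
  assumes "X \<in> measurable M N"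
  shows "sigma_finite_subalgebra M (vimage_algebra (space M) X N)"
proof -
  have "subalgebra M (vimage_algebra (space M) X N)"
    unfolding subalgebra_def using assms
    by (auto simp: sets_vimage_algebra2 measurable_space measurable_sets)
  then have "finite_measure_subalgebra M (vimage_algebra (space M) X N)"
    by (simp add: finite_measure_subalgebra_def finite_measure_subalgebra_axioms_def finite_measure_axioms)
  then show ?thesis by (rule finite_measure_subalgebra_is_sigma_finite)
qed

lemma measurable_vimage_comp:
  assumes "X \<in> space M \<rightarrow> space N" "h \<in> measurable N L"
  shows "(\<lambda>\<omega>. h (X \<omega>)) \<in> measurable (vimage_algebra (space M) X N) L"
  using measurable_compose[OF measurable_vimage_algebra1[OF assms(1)] assms(2)] by simp

locale msetup =
  fixes M :: "'w measure" and x :: "'w \<Rightarrow> real^'n" and A :: "'w \<Rightarrow> real^'n^'m"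
    and S :: "'w \<Rightarrow> 'm set"
  assumes ps: "prob_space M"
    and xm[measurable]: "x \<in> borel_measurable M" and Am[measurable]: "A \<in> borel_measurable M"
    and Sm[measurable]: "S \<in> measurable M (count_space UNIV)"
    and x2: "integrable M (\<lambda>\<omega>. (norm (x \<omega>))\<^sup>2)"
    and AA: "integrable M (\<lambda>\<omega>. norm (transpose (A \<omega>) ** A \<omega>))"
    and ind: "indep_rv M x borel A borel"
    and cind: "cond_indep M S (count_space UNIV) x borel (gen_sigma M A borel)"
begin

sublocale prob_space M by (rule ps)

abbreviation "MAS \<equiv> (borel :: (real^'n^'m) measure) \<Otimes>\<^sub>M (count_space UNIV :: 'm set measure)"
definition "AS = (\<lambda>\<omega>. (A \<omega>, S \<omega>))"

lemma AS_meas[measurable]: "AS \<in> measurable M MAS"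
  unfolding AS_def by measurable

definition "FA = vimage_algebra (space M) A borel"

lemma FA_sub: "sigma_finite_subalgebra M FA"
  unfolding FA_def by (rule sfs_vimage) measurable

lemma bnd_int:
  fixes f :: "'w \<Rightarrow> real"
  assumes "f \<in> borel_measurable M" "\<And>\<omega>. \<omega> \<in> space M \<Longrightarrow> \<bar>f \<omega>\<bar> \<le> c"
  shows "integrable M f"
  by (rule integrable_const_bound[where B=c]) (use assms in auto)

lemma indep_rect:
  assumes B: "B \<in> sets borel" and C: "C \<in> sets borel"
  shows "prob ({\<omega>\<in>space M. x \<omega> \<in> B} \<inter> ({\<omega>\<in>space M. A \<omega> \<in> C} \<inter> {\<omega>\<in>space M. S \<omega> \<in> D}))
       = prob {\<omega>\<in>space M. x \<omega> \<in> B} * prob ({\<omega>\<in>space M. A \<omega> \<in> C} \<inter> {\<omega>\<in>space M. S \<omega> \<in> D})"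
proof -
  interpret FA: sigma_finite_subalgebra M FA by (rule FA_sub)
  define iB where "iB = (\<lambda>\<omega>. indicator B (x \<omega>) :: real)"
  define iC where "iC = (\<lambda>\<omega>. indicator C (A \<omega>) :: real)"
  define iD where "iD = (\<lambda>\<omega>. indicator D (S \<omega>) :: real)"
  have [measurable]: "iB \<in> borel_measurable M" "iC \<in> borel_measurable M" "iD \<in> borel_measurable M"
    using B C unfolding iB_def iC_def iD_def by measurable
  have iCF[measurable]: "iC \<in> borel_measurable FA"
    unfolding iC_def FA_def
    by (rule measurable_vimage_comp) (use C in \<open>auto simp: measurable_space[OF Am]\<close>)
  have intB: "integrable M iB" and intCDB: "integrable M (\<lambda>\<omega>. iC \<omega> * (iD \<omega> * iB \<omega>))"
    and intCD: "integrable M (\<lambda>\<omega>. iC \<omega> * iD \<omega>)"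
    by (rule bnd_int[where c=1], measurable, simp add: iB_def iC_def iD_def indicator_def)+
  let ?p = "prob {\<omega>\<in>space M. x \<omega> \<in> B}"
  have ceB: "AE \<omega> in M. real_cond_exp M FA iB \<omega> = ?p"
  proof (rule FA.real_cond_exp_charact)
    fix E assume "E \<in> sets FA"
    then obtain C' where C': "C' \<in> sets borel" "E = A -` C' \<inter> space M"
      unfolding FA_def using sets_vimage_algebra2[of A "space M" borel] measurable_space[OF Am] by auto
    have Em: "E \<in> sets M" using C' by (simp add: measurable_sets[OF Am])
    have "(\<integral>\<omega>\<in>E. iB \<omega> \<partial>M) = measure M ({\<omega>\<in>space M. x \<omega> \<in> B} \<inter> {\<omega>\<in>space M. A \<omega> \<in> C'})"
    proof -
      have "(\<integral>\<omega>\<in>E. iB \<omega> \<partial>M) = (\<integral>\<omega>. indicator ({\<omega>\<in>space M. x \<omega> \<in> B} \<inter> {\<omega>\<in>space M. A \<omega> \<in> C'}) \<omega> \<partial>M)"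
        unfolding set_lebesgue_integral_def iB_def C'
        by (rule Bochner_Integration.integral_cong) (auto simp: indicator_def)
      also have "\<dots> = measure M ({\<omega>\<in>space M. x \<omega> \<in> B} \<inter> {\<omega>\<in>space M. A \<omega> \<in> C'})"
        using B C' by (auto intro!: arg_cong[where f="measure M"])
      finally show ?thesis .
    qed
    also have "\<dots> = ?p * prob E"
      using ind B C' unfolding indep_rv_def
      by (auto simp: C' Int_def conj_commute)
    also have "\<dots> = (\<integral>\<omega>\<in>E. ?p \<partial>M)"
      using Em by (simp add: set_lebesgue_integral_def)
    finally show "(\<integral>\<omega>\<in>E. iB \<omega> \<partial>M) = (\<integral>\<omega>\<in>E. ?p \<partial>M)" .
  qed (auto intro!: intB)
  have ci: "AE \<omega> in M. real_cond_exp M FA (\<lambda>\<omega>. iD \<omega> * iB \<omega>) \<omega> = real_cond_exp M FA iD \<omega> * real_cond_exp M FA iB \<omega>"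
    using cind B unfolding cond_indep_def iD_def iB_def FA_def gen_sigma_def by auto
  have "prob ({\<omega>\<in>space M. x \<omega> \<in> B} \<inter> ({\<omega>\<in>space M. A \<omega> \<in> C} \<inter> {\<omega>\<in>space M. S \<omega> \<in> D}))
      = (\<integral>\<omega>. iC \<omega> * (iD \<omega> * iB \<omega>) \<partial>M)"
  proof -
    have "(\<integral>\<omega>. iC \<omega> * (iD \<omega> * iB \<omega>) \<partial>M) = (\<integral>\<omega>. indicator ({\<omega>\<in>space M. x \<omega> \<in> B} \<inter> ({\<omega>\<in>space M. A \<omega> \<in> C} \<inter> {\<omega>\<in>space M. S \<omega> \<in> D})) \<omega> \<partial>M)"
      by (rule Bochner_Integration.integral_cong) (auto simp: indicator_def iB_def iC_def iD_def)
    also have "\<dots> = prob ({\<omega>\<in>space M. x \<omega> \<in> B} \<inter> ({\<omega>\<in>space M. A \<omega> \<in> C} \<inter> {\<omega>\<in>space M. S \<omega> \<in> D}))"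
      using B C by (auto intro!: arg_cong[where f="measure M"])
    finally show ?thesis by simp
  qed
  also have "\<dots> = (\<integral>\<omega>. iC \<omega> * real_cond_exp M FA (\<lambda>\<omega>. iD \<omega> * iB \<omega>) \<omega> \<partial>M)"
    by (rule FA.real_cond_exp_intg(2)[symmetric])
       (auto intro!: intCDB intCD)
  also have "\<dots> = (\<integral>\<omega>. iC \<omega> * (real_cond_exp M FA iD \<omega> * real_cond_exp M FA iB \<omega>) \<partial>M)"
    by (rule integral_cong_AE) (use ci in auto)
  also have "\<dots> = (\<integral>\<omega>. ?p * (iC \<omega> * real_cond_exp M FA iD \<omega>) \<partial>M)"
    by (rule integral_cong_AE) (use ceB in auto)
  also have "\<dots> = ?p * (\<integral>\<omega>. iC \<omega> * real_cond_exp M FA iD \<omega> \<partial>M)"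
    by simp
  also have "(\<integral>\<omega>. iC \<omega> * real_cond_exp M FA iD \<omega> \<partial>M) = (\<integral>\<omega>. iC \<omega> * iD \<omega> \<partial>M)"
    by (rule FA.real_cond_exp_intg(2))
       (auto intro!: intCDB intCD)
  also have "(\<integral>\<omega>. iC \<omega> * iD \<omega> \<partial>M) = prob ({\<omega>\<in>space M. A \<omega> \<in> C} \<inter> {\<omega>\<in>space M. S \<omega> \<in> D})"
  proof -
    have "(\<integral>\<omega>. iC \<omega> * iD \<omega> \<partial>M) = (\<integral>\<omega>. indicator ({\<omega>\<in>space M. A \<omega> \<in> C} \<inter> {\<omega>\<in>space M. S \<omega> \<in> D}) \<omega> \<partial>M)"
      by (rule Bochner_Integration.integral_cong) (auto simp: indicator_def iC_def iD_def)
    also have "\<dots> = prob ({\<omega>\<in>space M. A \<omega> \<in> C} \<inter> {\<omega>\<in>space M. S \<omega> \<in> D})"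
      using C by (auto intro!: arg_cong[where f="measure M"])
    finally show ?thesis .
  qed
  finally show ?thesis .
qed

lemma indep_AS:
  assumes Bm: "B \<in> sets borel" and Em: "E \<in> sets MAS"
  shows "prob ((x -` B \<inter> space M) \<inter> (AS -` E \<inter> space M)) = prob (x -` B \<inter> space M) * prob (AS -` E \<inter> space M)"
proof -
  define Gx where "Gx = {x -` B \<inter> space M | B. B \<in> sets (borel :: (real^'n) measure)}"
  define R where "R = {a \<times> b | a b. a \<in> sets (borel::(real^'n^'m) measure) \<and> b \<in> sets (count_space (UNIV::'m set set))}"
  define G2 where "G2 = {AS -` E \<inter> space M | E. E \<in> R}"
  have "indep_set Gx G2"
    unfolding indep_sets2_eq
  proof (intro conjI ballI)
    show "Gx \<subseteq> events" unfolding Gx_def by (auto intro: measurable_sets[OF xm])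
    show "G2 \<subseteq> events" unfolding G2_def R_def by (auto intro!: measurable_sets[OF AS_meas])
    fix a b assume "a \<in> Gx" "b \<in> G2"
    then obtain B C D where B: "B \<in> sets borel" "a = x -` B \<inter> space M"
      and C: "C \<in> sets borel" "b = AS -` (C \<times> D) \<inter> space M"
      unfolding Gx_def G2_def R_def by auto
    have a: "a = {\<omega>\<in>space M. x \<omega> \<in> B}" using B by auto
    have b: "b = {\<omega>\<in>space M. A \<omega> \<in> C} \<inter> {\<omega>\<in>space M. S \<omega> \<in> D}" using C by (auto simp: AS_def)
    show "prob (a \<inter> b) = prob a * prob b"
      unfolding a b using indep_rect[OF B(1) C(1)] .
  qed
  moreover have "Int_stable Gx"
    unfolding Int_stable_def Gx_def
  proof safe
    fix B1 B2 :: "(real^'n) set" assume "B1 \<in> sets borel" "B2 \<in> sets borel"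
    then show "\<exists>B. (x -` B1 \<inter> space M) \<inter> (x -` B2 \<inter> space M) = x -` B \<inter> space M \<and> B \<in> sets borel"
      by (intro exI[of _ "B1 \<inter> B2"]) auto
  qed
  moreover have "Int_stable G2"
    unfolding Int_stable_def G2_def R_def
  proof safe
    fix C1 C2 :: "(real^'n^'m) set" and D1 D2 :: "'m set set"
    assume "C1 \<in> sets borel" "C2 \<in> sets borel"
    then show "\<exists>E. (AS -` (C1 \<times> D1) \<inter> space M) \<inter> (AS -` (C2 \<times> D2) \<inter> space M) = AS -` E \<inter> space M \<and>
         E \<in> {a \<times> b |a b. a \<in> sets borel \<and> b \<in> sets (count_space UNIV)}"
      by (intro exI[of _ "(C1 \<inter> C2) \<times> (D1 \<inter> D2)"]) auto
  qed
  ultimately have I: "indep_set (sigma_sets (space M) Gx) (sigma_sets (space M) G2)"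
    by (rule indep_set_sigma_sets)
  have e1: "{AS -` E \<inter> space M | E. E \<in> sets MAS} = sigma_sets (space M) G2"
  proof -
    have "sets MAS = sigma_sets (UNIV \<times> UNIV) R"
      unfolding R_def sets_pair_measure by simp
    then show ?thesis
      unfolding G2_def using sigma_sets_vimage_commute[of AS "space M" UNIV R] by simp
  qed
  have "x -` B \<inter> space M \<in> sigma_sets (space M) Gx" using Bm by (auto simp: Gx_def)
  moreover have "AS -` E \<inter> space M \<in> sigma_sets (space M) G2" using Em e1 by blast
  ultimately show ?thesis using I unfolding indep_sets2_eq by blast
qed

lemma distr_eq: "distr M borel x \<Otimes>\<^sub>M distr M MAS AS = distr M (borel \<Otimes>\<^sub>M MAS) (\<lambda>\<omega>. (x \<omega>, AS \<omega>))"
proof -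
  let ?S = "distr M borel x" and ?T = "distr M MAS AS" and ?J = "distr M (borel \<Otimes>\<^sub>M MAS) (\<lambda>\<omega>. (x \<omega>, AS \<omega>))"
  interpret X: prob_space ?S by (rule prob_space_distr) measurable
  interpret Y: prob_space ?T by (rule prob_space_distr) measurable
  interpret XY: pair_prob_space ?S ?T ..
  show "?S \<Otimes>\<^sub>M ?T = ?J"
  proof (rule pair_measure_eqI)
    show "sigma_finite_measure ?S" ..
    show "sigma_finite_measure ?T" ..
    fix B E assume B: "B \<in> sets ?S" and E: "E \<in> sets ?T"
    have "emeasure ?J (B \<times> E) = emeasure M ((\<lambda>\<omega>. (x \<omega>, AS \<omega>)) -` (B \<times> E) \<inter> space M)"
      using B E by (intro emeasure_distr) auto
    also have "\<dots> = emeasure M ((x -` B \<inter> space M) \<inter> (AS -` E \<inter> space M))"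
      by (auto intro!: arg_cong[where f="emeasure M"])
    also have "\<dots> = emeasure M (x -` B \<inter> space M) * emeasure M (AS -` E \<inter> space M)"
      using indep_AS[of B E] B E
      by (simp add: emeasure_eq_measure measure_nonneg ennreal_mult)
    also have "\<dots> = emeasure ?S B * emeasure ?T E"
      using B E by (simp add: emeasure_distr)
    finally show "emeasure ?S B * emeasure ?T E = emeasure ?J (B \<times> E)" by simp
  qed simp
qed

lemma IP:
  fixes \<alpha> :: "real^'n \<Rightarrow> ennreal" and \<beta> :: "(real^'n^'m) \<times> 'm set \<Rightarrow> ennreal"
  assumes [measurable]: "\<alpha> \<in> borel_measurable borel" "\<beta> \<in> borel_measurable MAS"
  shows "(\<integral>\<^sup>+\<omega>. \<alpha> (x \<omega>) * \<beta> (AS \<omega>) \<partial>M) = (\<integral>\<^sup>+\<omega>. \<alpha> (x \<omega>) \<partial>M) * (\<integral>\<^sup>+\<omega>. \<beta> (AS \<omega>) \<partial>M)"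
proof -
  let ?Dx = "distr M borel x" and ?D = "distr M MAS AS"
  interpret Dx: prob_space ?Dx by (rule prob_space_distr) measurable
  interpret D: prob_space ?D by (rule prob_space_distr) measurable
  interpret P: pair_sigma_finite ?Dx ?D ..
  have eq: "?Dx \<Otimes>\<^sub>M ?D = distr M (borel \<Otimes>\<^sub>M MAS) (\<lambda>\<omega>. (x \<omega>, AS \<omega>))"
    by (rule distr_eq)
  have "(\<integral>\<^sup>+\<omega>. \<alpha> (x \<omega>) * \<beta> (AS \<omega>) \<partial>M) = (\<integral>\<^sup>+p. \<alpha> (fst p) * \<beta> (snd p) \<partial>distr M (borel \<Otimes>\<^sub>M MAS) (\<lambda>\<omega>. (x \<omega>, AS \<omega>)))"
    by (subst nn_integral_distr) auto
  also have "\<dots> = (\<integral>\<^sup>+p. \<alpha> (fst p) * \<beta> (snd p) \<partial>(?Dx \<Otimes>\<^sub>M ?D))" unfolding eq ..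
  also have "\<dots> = (\<integral>\<^sup>+\<xi>. \<integral>\<^sup>+z. \<alpha> \<xi> * \<beta> z \<partial>?D \<partial>?Dx)"
    by (subst D.nn_integral_fst[symmetric]) auto
  also have "\<dots> = (\<integral>\<^sup>+\<xi>. \<alpha> \<xi> * (\<integral>\<^sup>+z. \<beta> z \<partial>?D) \<partial>?Dx)"
    by (subst nn_integral_cmult) auto
  also have "\<dots> = (\<integral>\<^sup>+\<xi>. \<alpha> \<xi> \<partial>?Dx) * (\<integral>\<^sup>+z. \<beta> z \<partial>?D)"
    by (subst nn_integral_multc) auto
  also have "\<dots> = (\<integral>\<^sup>+\<omega>. \<alpha> (x \<omega>) \<partial>M) * (\<integral>\<^sup>+\<omega>. \<beta> (AS \<omega>) \<partial>M)"
    by (simp add: nn_integral_distr)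
  finally show ?thesis .
qed

end


context msetup begin

abbreviation "KS \<equiv> (count_space UNIV :: 'm set measure) \<Otimes>\<^sub>M (borel :: (real^'n^'m) measure)"
definition "Kf = (\<lambda>\<omega>. (S \<omega>, row_select (S \<omega>) (A \<omega>)))"
definition "kap = (\<lambda>p::(real^'n^'m) \<times> 'm set. (snd p, row_select (snd p) (fst p)))"

lemma Kf_AS: "Kf \<omega> = kap (AS \<omega>)" by (simp add: Kf_def kap_def AS_def)

lemma kap_meas[measurable]: "kap \<in> measurable MAS KS"
  unfolding kap_def by measurable

lemma Kf_meas[measurable]: "Kf \<in> measurable M KS"
  unfolding Kf_def by measurable

definition "G = F_A1 M A S"

lemma G_eq: "G = vimage_algebra (space M) Kf KS"
  by (simp add: G_def F_A1_def gen_sigma_def Kf_def)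

lemma G_sub: "sigma_finite_subalgebra M G"
  unfolding G_eq by (rule sfs_vimage) measurable

lemma G_meas_comp:
  assumes "h \<in> measurable KS L" shows "(\<lambda>\<omega>. h (Kf \<omega>)) \<in> measurable G L"
  unfolding G_eq by (rule measurable_vimage_comp) (use assms in \<open>auto simp: space_pair_measure\<close>)

lemma G_DD:
  fixes Y :: "'w \<Rightarrow> real"
  assumes "Y \<in> borel_measurable G"
  shows "\<exists>y\<in>borel_measurable KS. \<forall>\<omega>\<in>space M. Y \<omega> = y (Kf \<omega>)"
  by (rule DD_real) (use assms in \<open>auto simp: G_eq space_pair_measure\<close>)

lemma masterN:
  fixes \<zeta> :: "(real^'n^'m) \<times> 'm set \<Rightarrow> real" and \<Psi> :: "(real^'n) \<times> ('m set \<times> (real^'n^'m)) \<Rightarrow> ennreal"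
  assumes zm[measurable]: "\<zeta> \<in> borel_measurable MAS" and zpos: "\<And>z. \<zeta> z \<ge> 0"
    and zint: "integrable M (\<lambda>\<omega>. \<zeta> (AS \<omega>))"
    and Pm[measurable]: "\<Psi> \<in> borel_measurable (borel \<Otimes>\<^sub>M KS)"
  shows "(\<integral>\<^sup>+\<omega>. \<Psi> (x \<omega>, Kf \<omega>) * ennreal (\<zeta> (AS \<omega>)) \<partial>M)
       = (\<integral>\<^sup>+\<omega>. \<Psi> (x \<omega>, Kf \<omega>) * ennreal (real_cond_exp M G (\<lambda>\<omega>. \<zeta> (AS \<omega>)) \<omega>) \<partial>M)"
proof -
  interpret G: sigma_finite_subalgebra M G by (rule G_sub)
  define Z where "Z = (\<lambda>\<omega>. \<zeta> (AS \<omega>))"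
  define Y where "Y = real_cond_exp M G Z"
  have Zm[measurable]: "Z \<in> borel_measurable M" unfolding Z_def by measurable
  have Ym[measurable]: "Y \<in> borel_measurable M" unfolding Y_def by measurable
  have YG: "Y \<in> borel_measurable G" unfolding Y_def by measurable
  obtain y where ym[measurable]: "y \<in> borel_measurable KS" and y: "\<And>\<omega>. \<omega> \<in> space M \<Longrightarrow> Y \<omega> = y (Kf \<omega>)"
    using G_DD[OF YG] by auto
  have Ypos: "AE \<omega> in M. Y \<omega> \<ge> 0"
    unfolding Y_def by (rule G.real_cond_exp_pos) (auto simp: Z_def zpos)
  have Zint: "integrable M Z" using zint by (simp add: Z_def)
  have Yint: "integrable M Y" unfolding Y_def using Zint by (rule G.real_cond_exp_int(1))
  define \<mu>1 where "\<mu>1 = distr (density M (\<lambda>\<omega>. ennreal (Z \<omega>))) (borel \<Otimes>\<^sub>M KS) (\<lambda>\<omega>. (x \<omega>, Kf \<omega>))"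
  define \<mu>2 where "\<mu>2 = distr (density M (\<lambda>\<omega>. ennreal (Y \<omega>))) (borel \<Otimes>\<^sub>M KS) (\<lambda>\<omega>. (x \<omega>, Kf \<omega>))"
  have mu1: "(\<integral>\<^sup>+p. f p \<partial>\<mu>1) = (\<integral>\<^sup>+\<omega>. ennreal (Z \<omega>) * f (x \<omega>, Kf \<omega>) \<partial>M)"
    if [measurable]: "f \<in> borel_measurable (borel \<Otimes>\<^sub>M KS)" for f
    unfolding \<mu>1_def by (subst nn_integral_distr) (auto simp: nn_integral_density)
  have mu2: "(\<integral>\<^sup>+p. f p \<partial>\<mu>2) = (\<integral>\<^sup>+\<omega>. ennreal (Y \<omega>) * f (x \<omega>, Kf \<omega>) \<partial>M)"
    if [measurable]: "f \<in> borel_measurable (borel \<Otimes>\<^sub>M KS)" for f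
    unfolding \<mu>2_def by (subst nn_integral_distr) (auto simp: nn_integral_density)
  define E where "E = {a \<times> b | a b. a \<in> sets (borel :: (real^'n) measure) \<and> b \<in> sets KS}"
  have sigE: "sets (borel \<Otimes>\<^sub>M KS) = sigma_sets UNIV E"
    unfolding E_def sets_pair_measure by (simp add: space_pair_measure)
  have UE: "UNIV \<in> E"
  proof -
    have "(UNIV :: ('m set \<times> (real^'n^'m)) set) \<in> sets KS"
      using sets.top[of KS] by (simp add: space_pair_measure)
    then show ?thesis unfolding E_def by (intro CollectI exI[of _ UNIV]) auto
  qed
  have indC: "(\<integral>\<^sup>+\<omega>. indicator C (Kf \<omega>) * ennreal (Z \<omega>) \<partial>M) = (\<integral>\<^sup>+\<omega>. indicator C (Kf \<omega>) * ennreal (Y \<omega>) \<partial>M)"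
    if C: "C \<in> sets KS" for C
  proof -
    have fG: "(\<lambda>\<omega>. indicator C (Kf \<omega>) :: real) \<in> borel_measurable G"
      by (rule G_meas_comp) (use C in simp)
    have iZ: "integrable M (\<lambda>\<omega>. indicator C (Kf \<omega>) * Z \<omega>)"
      by (rule Bochner_Integration.integrable_bound[OF Zint]) (use C in \<open>auto simp: indicator_def\<close>)
    have iY: "integrable M (\<lambda>\<omega>. indicator C (Kf \<omega>) * Y \<omega>)"
      by (rule Bochner_Integration.integrable_bound[OF Yint]) (use C in \<open>auto simp: indicator_def\<close>)
    have r: "(\<integral>\<omega>. indicator C (Kf \<omega>) * Z \<omega> \<partial>M) = (\<integral>\<omega>. indicator C (Kf \<omega>) * Y \<omega> \<partial>M)"
      unfolding Y_def using G.real_cond_exp_intg(2)[OF iZ fG] by simp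
    have "(\<integral>\<^sup>+\<omega>. indicator C (Kf \<omega>) * ennreal (Z \<omega>) \<partial>M) = (\<integral>\<^sup>+\<omega>. ennreal (indicator C (Kf \<omega>) * Z \<omega>) \<partial>M)"
      by (rule nn_integral_cong) (simp add: indicator_def)
    also have "\<dots> = ennreal (\<integral>\<omega>. indicator C (Kf \<omega>) * Z \<omega> \<partial>M)"
      by (rule nn_integral_eq_integral[OF iZ]) (auto simp: Z_def zpos)
    also have "\<dots> = ennreal (\<integral>\<omega>. indicator C (Kf \<omega>) * Y \<omega> \<partial>M)" using r by simp
    also have "\<dots> = (\<integral>\<^sup>+\<omega>. ennreal (indicator C (Kf \<omega>) * Y \<omega>) \<partial>M)"
      by (rule nn_integral_eq_integral[OF iY, symmetric]) (use Ypos in auto)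
    also have "\<dots> = (\<integral>\<^sup>+\<omega>. indicator C (Kf \<omega>) * ennreal (Y \<omega>) \<partial>M)"
      by (rule nn_integral_cong) (simp add: indicator_def)
    finally show ?thesis .
  qed
  have rect: "emeasure \<mu>1 X = emeasure \<mu>2 X" if "X \<in> E" for X
  proof -
    obtain B C where B: "B \<in> sets borel" and C: "C \<in> sets KS" and X: "X = B \<times> C"
      using \<open>X \<in> E\<close> unfolding E_def by auto
    have Xm: "X \<in> sets (borel \<Otimes>\<^sub>M KS)" using B C X by auto
    have "emeasure \<mu>1 X = (\<integral>\<^sup>+p. indicator X p \<partial>\<mu>1)"
      using Xm by (simp add: \<mu>1_def)
    also have "\<dots> = (\<integral>\<^sup>+\<omega>. ennreal (Z \<omega>) * indicator X (x \<omega>, Kf \<omega>) \<partial>M)"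
      by (rule mu1) (use Xm in simp)
    also have "\<dots> = (\<integral>\<^sup>+\<omega>. indicator B (x \<omega>) * (indicator C (kap (AS \<omega>)) * ennreal (\<zeta> (AS \<omega>))) \<partial>M)"
      by (rule nn_integral_cong) (simp add: X Z_def Kf_AS indicator_times mult_ac)
    also have "\<dots> = (\<integral>\<^sup>+\<omega>. indicator B (x \<omega>) \<partial>M) * (\<integral>\<^sup>+\<omega>. indicator C (kap (AS \<omega>)) * ennreal (\<zeta> (AS \<omega>)) \<partial>M)"
      by (rule IP) (use B C in measurable)
    also have "(\<integral>\<^sup>+\<omega>. indicator C (kap (AS \<omega>)) * ennreal (\<zeta> (AS \<omega>)) \<partial>M) = (\<integral>\<^sup>+\<omega>. indicator C (Kf \<omega>) * ennreal (Z \<omega>) \<partial>M)"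
      by (simp add: Kf_AS Z_def)
    also have "\<dots> = (\<integral>\<^sup>+\<omega>. indicator C (Kf \<omega>) * ennreal (Y \<omega>) \<partial>M)" using indC[OF C] .
    also have "\<dots> = (\<integral>\<^sup>+\<omega>. indicator C (kap (AS \<omega>)) * ennreal (y (kap (AS \<omega>))) \<partial>M)"
      by (rule nn_integral_cong) (simp add: y Kf_AS[symmetric])
    also have "(\<integral>\<^sup>+\<omega>. indicator B (x \<omega>) \<partial>M) * \<dots> = (\<integral>\<^sup>+\<omega>. indicator B (x \<omega>) * (indicator C (kap (AS \<omega>)) * ennreal (y (kap (AS \<omega>)))) \<partial>M)"
      by (rule IP[symmetric]) (use B C in measurable)
    also have "\<dots> = (\<integral>\<^sup>+\<omega>. ennreal (Y \<omega>) * indicator X (x \<omega>, Kf \<omega>) \<partial>M)"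
      by (rule nn_integral_cong) (simp add: X y Kf_AS indicator_times mult_ac)
    also have "\<dots> = (\<integral>\<^sup>+p. indicator X p \<partial>\<mu>2)"
      by (rule mu2[symmetric]) (use Xm in simp)
    also have "\<dots> = emeasure \<mu>2 X"
      using Xm by (simp add: \<mu>2_def)
    finally show ?thesis .
  qed
  have fin: "emeasure \<mu>1 UNIV \<noteq> \<infinity>"
  proof -
    have "emeasure \<mu>1 UNIV = (\<integral>\<^sup>+p. indicator UNIV p \<partial>\<mu>1)" by (simp add: \<mu>1_def space_pair_measure)
    also have "\<dots> = (\<integral>\<^sup>+\<omega>. ennreal (Z \<omega>) * indicator UNIV (x \<omega>, Kf \<omega>) \<partial>M)"
      by (rule mu1) simp
    also have "\<dots> = ennreal (\<integral>\<omega>. Z \<omega> \<partial>M)"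
      using nn_integral_eq_integral[OF Zint] by (simp add: Z_def zpos)
    finally show ?thesis by simp
  qed
  have "\<mu>1 = \<mu>2"
  proof (rule measure_eqI_generator_eq[where E=E and \<Omega>=UNIV and A="\<lambda>_. UNIV"])
    show "Int_stable E" unfolding E_def by (rule Int_stable_pair_measure_generator)
    show "E \<subseteq> Pow UNIV" by simp
    show "sets \<mu>1 = sigma_sets UNIV E" by (simp add: \<mu>1_def sigE)
    show "sets \<mu>2 = sigma_sets UNIV E" by (simp add: \<mu>2_def sigE)
    show "range (\<lambda>_. UNIV) \<subseteq> E" using UE by auto
  qed (use rect fin in auto)
  have "(\<integral>\<^sup>+\<omega>. \<Psi> (x \<omega>, Kf \<omega>) * ennreal (\<zeta> (AS \<omega>)) \<partial>M) = (\<integral>\<^sup>+p. \<Psi> p \<partial>\<mu>1)"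
    by (subst mu1) (auto simp: Z_def mult_ac)
  also have "\<dots> = (\<integral>\<^sup>+p. \<Psi> p \<partial>\<mu>2)" using \<open>\<mu>1 = \<mu>2\<close> by simp
  also have "\<dots> = (\<integral>\<^sup>+\<omega>. \<Psi> (x \<omega>, Kf \<omega>) * ennreal (real_cond_exp M G (\<lambda>\<omega>. \<zeta> (AS \<omega>)) \<omega>) \<partial>M)"
    by (subst mu2) (auto simp: Y_def Z_def mult_ac)
  finally show ?thesis .
qed

lemma cond_int:
  assumes "integrable M f" shows "integrable M (real_cond_exp M G f)"
proof -
  interpret G: sigma_finite_subalgebra M G by (rule G_sub)
  show ?thesis using assms by (rule G.real_cond_exp_int(1))
qed

lemma int_bounded_mult:
  fixes f g :: "'w \<Rightarrow> real"
  assumes "integrable M g" "f \<in> borel_measurable M" "\<And>\<omega>. \<omega> \<in> space M \<Longrightarrow> \<bar>f \<omega>\<bar> \<le> c"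
  shows "integrable M (\<lambda>\<omega>. f \<omega> * g \<omega>)"
proof (rule Bochner_Integration.integrable_bound[where f="\<lambda>\<omega>. c * g \<omega>"])
  show "integrable M (\<lambda>\<omega>. c * g \<omega>)" using assms(1) by simp
  show "(\<lambda>\<omega>. f \<omega> * g \<omega>) \<in> borel_measurable M" using assms(1,2) by measurable
  show "AE \<omega> in M. norm (f \<omega> * g \<omega>) \<le> norm (c * g \<omega>)"
  proof (intro AE_I2)
    fix \<omega> assume "\<omega> \<in> space M"
    then have "\<bar>f \<omega>\<bar> \<le> c" by (rule assms(3))
    then have "\<bar>f \<omega>\<bar> * \<bar>g \<omega>\<bar> \<le> c * \<bar>g \<omega>\<bar>" by (simp add: mult_right_mono)
    moreover have "c \<ge> 0" using \<open>\<bar>f \<omega>\<bar> \<le> c\<close> by linarith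
    ultimately show "norm (f \<omega> * g \<omega>) \<le> norm (c * g \<omega>)" by (simp add: abs_mult)
  qed
qed

lemma masterS0:
  fixes \<zeta> :: "(real^'n^'m) \<times> 'm set \<Rightarrow> real" and \<Psi> :: "(real^'n) \<times> ('m set \<times> (real^'n^'m)) \<Rightarrow> real"
  assumes zm[measurable]: "\<zeta> \<in> borel_measurable MAS" and zpos: "\<And>z. \<zeta> z \<ge> 0"
    and zint: "integrable M (\<lambda>\<omega>. \<zeta> (AS \<omega>))"
    and Pm[measurable]: "\<Psi> \<in> borel_measurable (borel \<Otimes>\<^sub>M KS)" and Ppos: "\<And>p. \<Psi> p \<ge> 0" and bnd: "\<And>p. \<Psi> p \<le> c"
  shows "(\<integral>\<omega>. \<Psi> (x \<omega>, Kf \<omega>) * \<zeta> (AS \<omega>) \<partial>M) = (\<integral>\<omega>. \<Psi> (x \<omega>, Kf \<omega>) * real_cond_exp M G (\<lambda>\<omega>. \<zeta> (AS \<omega>)) \<omega> \<partial>M)"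
proof -
  interpret G: sigma_finite_subalgebra M G by (rule G_sub)
  define Z where "Z = (\<lambda>\<omega>. \<zeta> (AS \<omega>))"
  define Y where "Y = real_cond_exp M G Z"
  have Zint: "integrable M Z" using zint by (simp add: Z_def)
  have Yint: "integrable M Y" unfolding Y_def by (rule cond_int[OF Zint])
  have Ypos: "AE \<omega> in M. Y \<omega> \<ge> 0"
    unfolding Y_def by (rule G.real_cond_exp_pos) (auto simp: Z_def zpos)
  have babs: "\<bar>\<Psi> p\<bar> \<le> c" for p using Ppos[of p] bnd[of p] by simp
  have i1: "integrable M (\<lambda>\<omega>. \<Psi> (x \<omega>, Kf \<omega>) * Z \<omega>)"
    by (rule int_bounded_mult[OF Zint _ babs]) measurable
  have i2: "integrable M (\<lambda>\<omega>. \<Psi> (x \<omega>, Kf \<omega>) * Y \<omega>)"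
    by (rule int_bounded_mult[OF Yint _ babs]) measurable
  have "ennreal (\<integral>\<omega>. \<Psi> (x \<omega>, Kf \<omega>) * Z \<omega> \<partial>M) = (\<integral>\<^sup>+\<omega>. ennreal (\<Psi> (x \<omega>, Kf \<omega>) * Z \<omega>) \<partial>M)"
    by (rule nn_integral_eq_integral[OF i1, symmetric]) (auto simp: Z_def zpos Ppos)
  also have "\<dots> = (\<integral>\<^sup>+\<omega>. ennreal (\<Psi> (x \<omega>, Kf \<omega>)) * ennreal (\<zeta> (AS \<omega>)) \<partial>M)"
    by (rule nn_integral_cong) (simp add: Z_def ennreal_mult' Ppos)
  also have "\<dots> = (\<integral>\<^sup>+\<omega>. ennreal (\<Psi> (x \<omega>, Kf \<omega>)) * ennreal (real_cond_exp M G (\<lambda>\<omega>. \<zeta> (AS \<omega>)) \<omega>) \<partial>M)"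
    by (rule masterN[OF zm zpos zint, where \<Psi>="\<lambda>p. ennreal (\<Psi> p)"]) measurable
  also have "\<dots> = (\<integral>\<^sup>+\<omega>. ennreal (\<Psi> (x \<omega>, Kf \<omega>) * Y \<omega>) \<partial>M)"
    by (rule nn_integral_cong) (simp add: Y_def Z_def ennreal_mult' Ppos)
  also have "\<dots> = ennreal (\<integral>\<omega>. \<Psi> (x \<omega>, Kf \<omega>) * Y \<omega> \<partial>M)"
    by (rule nn_integral_eq_integral[OF i2]) (use Ypos in \<open>auto simp: Ppos\<close>)
  finally have "ennreal (\<integral>\<omega>. \<Psi> (x \<omega>, Kf \<omega>) * Z \<omega> \<partial>M) = ennreal (\<integral>\<omega>. \<Psi> (x \<omega>, Kf \<omega>) * Y \<omega> \<partial>M)" .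
  moreover have "(\<integral>\<omega>. \<Psi> (x \<omega>, Kf \<omega>) * Z \<omega> \<partial>M) \<ge> 0"
    by (rule integral_nonneg_AE) (auto simp: Z_def zpos Ppos)
  moreover have "(\<integral>\<omega>. \<Psi> (x \<omega>, Kf \<omega>) * Y \<omega> \<partial>M) \<ge> 0"
    by (rule integral_nonneg_AE) (use Ypos in \<open>auto simp: Ppos\<close>)
  ultimately show ?thesis by (simp add: Y_def Z_def)
qed

lemma masterS1:
  fixes \<zeta> :: "(real^'n^'m) \<times> 'm set \<Rightarrow> real" and \<Psi> :: "(real^'n) \<times> ('m set \<times> (real^'n^'m)) \<Rightarrow> real"
  assumes zm[measurable]: "\<zeta> \<in> borel_measurable MAS" and zpos: "\<And>z. \<zeta> z \<ge> 0"
    and zint: "integrable M (\<lambda>\<omega>. \<zeta> (AS \<omega>))"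
    and Pm[measurable]: "\<Psi> \<in> borel_measurable (borel \<Otimes>\<^sub>M KS)" and bnd: "\<And>p. \<bar>\<Psi> p\<bar> \<le> c"
  shows "(\<integral>\<omega>. \<Psi> (x \<omega>, Kf \<omega>) * \<zeta> (AS \<omega>) \<partial>M) = (\<integral>\<omega>. \<Psi> (x \<omega>, Kf \<omega>) * real_cond_exp M G (\<lambda>\<omega>. \<zeta> (AS \<omega>)) \<omega> \<partial>M)"
proof -
  interpret G: sigma_finite_subalgebra M G by (rule G_sub)
  define Z where "Z = (\<lambda>\<omega>. \<zeta> (AS \<omega>))"
  define Y where "Y = real_cond_exp M G Z"
  have Zint: "integrable M Z" using zint by (simp add: Z_def)
  have Yint: "integrable M Y" unfolding Y_def by (rule cond_int[OF Zint])
  have pc: "0 \<le> \<Psi> p + c" for p using bnd[of p] by (simp add: abs_le_iff)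
  have pc2: "\<Psi> p + c \<le> 2 * c" for p using bnd[of p] by (simp add: abs_le_iff)
  have a: "(\<integral>\<omega>. (\<Psi> (x \<omega>, Kf \<omega>) + c) * Z \<omega> \<partial>M) = (\<integral>\<omega>. (\<Psi> (x \<omega>, Kf \<omega>) + c) * Y \<omega> \<partial>M)"
    unfolding Y_def Z_def by (rule masterS0[OF zm zpos zint _ pc pc2]) measurable
  have b: "(\<integral>\<omega>. c * Z \<omega> \<partial>M) = (\<integral>\<omega>. c * Y \<omega> \<partial>M)"
    using G.real_cond_exp_int(2)[OF Zint] by (simp add: Y_def)
  have babs: "\<bar>\<Psi> p + c\<bar> \<le> 2 * c" for p using bnd[of p] by (simp add: abs_le_iff)
  have i1: "integrable M (\<lambda>\<omega>. (\<Psi> (x \<omega>, Kf \<omega>) + c) * Z \<omega>)"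
    by (rule int_bounded_mult[OF Zint _ babs]) measurable
  have i2: "integrable M (\<lambda>\<omega>. (\<Psi> (x \<omega>, Kf \<omega>) + c) * Y \<omega>)"
    by (rule int_bounded_mult[OF Yint _ babs]) measurable
  have "(\<integral>\<omega>. \<Psi> (x \<omega>, Kf \<omega>) * Z \<omega> \<partial>M) = (\<integral>\<omega>. (\<Psi> (x \<omega>, Kf \<omega>) + c) * Z \<omega> - c * Z \<omega> \<partial>M)"
    by (simp add: algebra_simps)
  also have "\<dots> = (\<integral>\<omega>. (\<Psi> (x \<omega>, Kf \<omega>) + c) * Z \<omega> \<partial>M) - (\<integral>\<omega>. c * Z \<omega> \<partial>M)"
    by (rule Bochner_Integration.integral_diff[OF i1]) (use Zint in simp)
  also have "\<dots> = (\<integral>\<omega>. (\<Psi> (x \<omega>, Kf \<omega>) + c) * Y \<omega> \<partial>M) - (\<integral>\<omega>. c * Y \<omega> \<partial>M)"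
    using a b by simp
  also have "\<dots> = (\<integral>\<omega>. (\<Psi> (x \<omega>, Kf \<omega>) + c) * Y \<omega> - c * Y \<omega> \<partial>M)"
    by (rule Bochner_Integration.integral_diff[OF i2, symmetric]) (use Yint in simp)
  also have "\<dots> = (\<integral>\<omega>. \<Psi> (x \<omega>, Kf \<omega>) * Y \<omega> \<partial>M)"
    by (simp add: algebra_simps)
  finally show ?thesis by (simp add: Y_def Z_def)
qed

lemma masterS:
  fixes \<zeta> :: "(real^'n^'m) \<times> 'm set \<Rightarrow> real" and \<Psi> :: "(real^'n) \<times> ('m set \<times> (real^'n^'m)) \<Rightarrow> real"
  assumes zm[measurable]: "\<zeta> \<in> borel_measurable MAS"
    and zint: "integrable M (\<lambda>\<omega>. \<zeta> (AS \<omega>))"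
    and Pm[measurable]: "\<Psi> \<in> borel_measurable (borel \<Otimes>\<^sub>M KS)" and bnd: "\<And>p. \<bar>\<Psi> p\<bar> \<le> c"
  shows "(\<integral>\<omega>. \<Psi> (x \<omega>, Kf \<omega>) * \<zeta> (AS \<omega>) \<partial>M) = (\<integral>\<omega>. \<Psi> (x \<omega>, Kf \<omega>) * real_cond_exp M G (\<lambda>\<omega>. \<zeta> (AS \<omega>)) \<omega> \<partial>M)"
proof -
  interpret G: sigma_finite_subalgebra M G by (rule G_sub)
  define zp where "zp = (\<lambda>z. max (\<zeta> z) 0)"
  define zn where "zn = (\<lambda>z. max (- \<zeta> z) 0)"
  have [measurable]: "zp \<in> borel_measurable MAS" "zn \<in> borel_measurable MAS"
    unfolding zp_def zn_def by measurable
  have ip: "integrable M (\<lambda>\<omega>. zp (AS \<omega>))" unfolding zp_def using zint by (rule integrable_max) simp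
  have inn: "integrable M (\<lambda>\<omega>. zn (AS \<omega>))" unfolding zn_def using zint by (intro integrable_max) auto
  have zeq: "(\<lambda>\<omega>. \<zeta> (AS \<omega>)) = (\<lambda>\<omega>. zp (AS \<omega>) - zn (AS \<omega>))"
    by (auto simp: zp_def zn_def)
  have ae: "AE \<omega> in M. real_cond_exp M G (\<lambda>\<omega>. \<zeta> (AS \<omega>)) \<omega> = real_cond_exp M G (\<lambda>\<omega>. zp (AS \<omega>)) \<omega> - real_cond_exp M G (\<lambda>\<omega>. zn (AS \<omega>)) \<omega>"
    unfolding zeq by (rule G.real_cond_exp_diff[OF ip inn])
  have ep: "(\<integral>\<omega>. \<Psi> (x \<omega>, Kf \<omega>) * zp (AS \<omega>) \<partial>M) = (\<integral>\<omega>. \<Psi> (x \<omega>, Kf \<omega>) * real_cond_exp M G (\<lambda>\<omega>. zp (AS \<omega>)) \<omega> \<partial>M)"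
    by (rule masterS1[OF _ _ ip Pm bnd]) (auto simp: zp_def)
  have en: "(\<integral>\<omega>. \<Psi> (x \<omega>, Kf \<omega>) * zn (AS \<omega>) \<partial>M) = (\<integral>\<omega>. \<Psi> (x \<omega>, Kf \<omega>) * real_cond_exp M G (\<lambda>\<omega>. zn (AS \<omega>)) \<omega> \<partial>M)"
    by (rule masterS1[OF _ _ inn Pm bnd]) (auto simp: zn_def)
  have i1: "integrable M (\<lambda>\<omega>. \<Psi> (x \<omega>, Kf \<omega>) * zp (AS \<omega>))"
    by (rule int_bounded_mult[OF ip _ bnd]) measurable
  have i2: "integrable M (\<lambda>\<omega>. \<Psi> (x \<omega>, Kf \<omega>) * zn (AS \<omega>))"
    by (rule int_bounded_mult[OF inn _ bnd]) measurable
  have i3: "integrable M (\<lambda>\<omega>. \<Psi> (x \<omega>, Kf \<omega>) * real_cond_exp M G (\<lambda>\<omega>. zp (AS \<omega>)) \<omega>)"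
    by (rule int_bounded_mult[OF cond_int[OF ip] _ bnd]) measurable
  have i4: "integrable M (\<lambda>\<omega>. \<Psi> (x \<omega>, Kf \<omega>) * real_cond_exp M G (\<lambda>\<omega>. zn (AS \<omega>)) \<omega>)"
    by (rule int_bounded_mult[OF cond_int[OF inn] _ bnd]) measurable
  have "(\<integral>\<omega>. \<Psi> (x \<omega>, Kf \<omega>) * \<zeta> (AS \<omega>) \<partial>M)
      = (\<integral>\<omega>. \<Psi> (x \<omega>, Kf \<omega>) * zp (AS \<omega>) - \<Psi> (x \<omega>, Kf \<omega>) * zn (AS \<omega>) \<partial>M)"
  proof -
    have pw: "\<zeta> z = zp z - zn z" for z by (auto simp: zp_def zn_def max_def)
    show ?thesis by (simp add: pw[of "AS _"] right_diff_distrib)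
  qed
  also have "\<dots> = (\<integral>\<omega>. \<Psi> (x \<omega>, Kf \<omega>) * zp (AS \<omega>) \<partial>M) - (\<integral>\<omega>. \<Psi> (x \<omega>, Kf \<omega>) * zn (AS \<omega>) \<partial>M)"
    by (rule Bochner_Integration.integral_diff[OF i1 i2])
  also have "\<dots> = (\<integral>\<omega>. \<Psi> (x \<omega>, Kf \<omega>) * real_cond_exp M G (\<lambda>\<omega>. zp (AS \<omega>)) \<omega> \<partial>M)
      - (\<integral>\<omega>. \<Psi> (x \<omega>, Kf \<omega>) * real_cond_exp M G (\<lambda>\<omega>. zn (AS \<omega>)) \<omega> \<partial>M)"
    using ep en by simp
  also have "\<dots> = (\<integral>\<omega>. \<Psi> (x \<omega>, Kf \<omega>) * real_cond_exp M G (\<lambda>\<omega>. zp (AS \<omega>)) \<omega>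
      - \<Psi> (x \<omega>, Kf \<omega>) * real_cond_exp M G (\<lambda>\<omega>. zn (AS \<omega>)) \<omega> \<partial>M)"
    by (rule Bochner_Integration.integral_diff[OF i3 i4, symmetric])
  also have "\<dots> = (\<integral>\<omega>. \<Psi> (x \<omega>, Kf \<omega>) * real_cond_exp M G (\<lambda>\<omega>. \<zeta> (AS \<omega>)) \<omega> \<partial>M)"
  proof (rule integral_cong_AE)
    show "AE \<omega> in M. \<Psi> (x \<omega>, Kf \<omega>) * real_cond_exp M G (\<lambda>\<omega>. zp (AS \<omega>)) \<omega> -
         \<Psi> (x \<omega>, Kf \<omega>) * real_cond_exp M G (\<lambda>\<omega>. zn (AS \<omega>)) \<omega> =
         \<Psi> (x \<omega>, Kf \<omega>) * real_cond_exp M G (\<lambda>\<omega>. \<zeta> (AS \<omega>)) \<omega>"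
      using ae by eventually_elim (simp add: right_diff_distrib)
  qed measurable
  finally show ?thesis .
qed

end


lemma inner_AA: "(A *v u) \<bullet> (A *v v) = u \<bullet> ((transpose A ** A) *v (v::real^'n))"
  by (metis inner_mv_transpose matrix_vector_mul_assoc transpose_transpose)

lemma qf_expand: "u \<bullet> (X *v v) = (\<Sum>i\<in>UNIV. \<Sum>j\<in>UNIV. u $ i * v $ j * X $ i $ j)" for X :: "real^'n^'n"
  by (simp add: inner_vec_def matrix_vector_mult_def sum_distrib_left mult_ac)

lemma ZZ_sym: "(transpose X ** X) $ i $ j = (transpose X ** X) $ j $ i" for X :: "real^'n^'m"
  by (simp add: matrix_matrix_mult_def transpose_def mult.commute)

lemma abs_nth_le: "\<bar>v $ i\<bar> \<le> norm (v::real^'n)"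
  using Finite_Cartesian_Product.norm_nth_le[of v i] by simp

context msetup begin

definition "Zm = (\<lambda>\<omega>. transpose (A \<omega>) ** A \<omega>)"
definition "Qm = Qmat M A S"

lemma Zm_meas[measurable]: "Zm \<in> borel_measurable M" unfolding Zm_def by measurable

lemma Qm_entry: "Qm \<omega> $ i $ j = real_cond_exp M G (\<lambda>\<omega>. Zm \<omega> $ i $ j) \<omega>"
  by (simp add: Qm_def Qmat_def mcond_exp_def G_def Zm_def)

lemma Qm_sym: "Qm \<omega> $ i $ j = Qm \<omega> $ j $ i"
  unfolding Qm_entry Zm_def by (subst ZZ_sym) (rule refl)

lemma Qm_transpose: "transpose (Qm \<omega>) = Qm \<omega>"
  by (simp add: vec_eq_iff transpose_def Qm_sym)

lemma Qm_measG: "Qm \<in> borel_measurable G"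
proof -
  have "Qm = (\<lambda>\<omega>. \<chi> i j. real_cond_exp M G (\<lambda>\<omega>. Zm \<omega> $ i $ j) \<omega>)"
    by (simp add: fun_eq_iff vec_eq_iff Qm_entry)
  also have "\<dots> \<in> borel_measurable G"
    by (intro bm_vec_lambda borel_measurable_cond_exp)
  finally show ?thesis .
qed

lemma Qm_meas[measurable]: "Qm \<in> borel_measurable M"
proof -
  interpret G: sigma_finite_subalgebra M G by (rule G_sub)
  show ?thesis using measurable_from_subalg[OF G.subalg Qm_measG] .
qed

lemma Qm_DD: "\<exists>q\<in>borel_measurable KS. \<forall>\<omega>\<in>space M. Qm \<omega> = q (Kf \<omega>)"
  by (rule DD_rmat) (use Qm_measG in \<open>auto simp: G_eq space_pair_measure\<close>)

lemma Zm_entry_int: "integrable M (\<lambda>\<omega>. Zm \<omega> $ i $ j)"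
proof (rule Bochner_Integration.integrable_bound[OF AA])
  show "(\<lambda>\<omega>. Zm \<omega> $ i $ j) \<in> borel_measurable M" by measurable
  show "AE \<omega> in M. norm (Zm \<omega> $ i $ j) \<le> norm (norm (transpose (A \<omega>) ** A \<omega>))"
    using Finite_Cartesian_Product.norm_nth_le[of "Zm _ $ i" j] Finite_Cartesian_Product.norm_nth_le[of "Zm _" i] by (auto simp: Zm_def intro!: AE_I2 intro: order_trans)
qed

lemma Zm_AS: "Zm \<omega> $ i $ j = (\<lambda>z. (transpose (fst z) ** fst z) $ i $ j) (AS \<omega>)"
  by (simp add: Zm_def AS_def)

lemma QT:
  fixes \<Phi> :: "(real^'n) \<times> ('m set \<times> (real^'n^'m)) \<Rightarrow> real^'n" and \<Theta> :: "(real^'n) \<times> ('m set \<times> (real^'n^'m)) \<Rightarrow> real"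
  assumes Pm[measurable]: "\<Phi> \<in> borel_measurable (borel \<Otimes>\<^sub>M KS)" and Tm[measurable]: "\<Theta> \<in> borel_measurable (borel \<Otimes>\<^sub>M KS)"
    and T1: "\<And>p. \<bar>\<Theta> p\<bar> \<le> 1" and Tc: "\<And>p. \<Theta> p \<noteq> 0 \<Longrightarrow> norm (\<Phi> p) \<le> c"
  shows "integrable M (\<lambda>\<omega>. \<Theta> (x \<omega>, Kf \<omega>) * (norm (A \<omega> *v \<Phi> (x \<omega>, Kf \<omega>)))\<^sup>2)"
    and "integrable M (\<lambda>\<omega>. \<Theta> (x \<omega>, Kf \<omega>) * (\<Phi> (x \<omega>, Kf \<omega>) \<bullet> (Qm \<omega> *v \<Phi> (x \<omega>, Kf \<omega>))))"
    and "(\<integral>\<omega>. \<Theta> (x \<omega>, Kf \<omega>) * (norm (A \<omega> *v \<Phi> (x \<omega>, Kf \<omega>)))\<^sup>2 \<partial>M)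
       = (\<integral>\<omega>. \<Theta> (x \<omega>, Kf \<omega>) * (\<Phi> (x \<omega>, Kf \<omega>) \<bullet> (Qm \<omega> *v \<Phi> (x \<omega>, Kf \<omega>))) \<partial>M)"
proof -
  define \<Psi> where "\<Psi> i j p = \<Theta> p * \<Phi> p $ i * \<Phi> p $ j" for i j p
  have Psim[measurable]: "\<Psi> i j \<in> borel_measurable (borel \<Otimes>\<^sub>M KS)" for i j unfolding \<Psi>_def by measurable
  have Psib: "\<bar>\<Psi> i j p\<bar> \<le> c\<^sup>2" for i j p
  proof (cases "\<Theta> p = 0")
    case True then show ?thesis by (simp add: \<Psi>_def)
  next
    case False
    then have n: "norm (\<Phi> p) \<le> c" by (rule Tc)
    have c0: "0 \<le> c" using n norm_ge_zero[of "\<Phi> p"] by linarith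
    have "\<bar>\<Psi> i j p\<bar> = \<bar>\<Theta> p\<bar> * \<bar>\<Phi> p $ i\<bar> * \<bar>\<Phi> p $ j\<bar>" by (simp add: \<Psi>_def abs_mult)
    also have "\<dots> \<le> 1 * c * c"
      by (intro mult_mono T1) (use abs_nth_le[of "\<Phi> p"] n c0 in \<open>auto intro: order_trans\<close>)
    finally show ?thesis by (simp add: power2_eq_square)
  qed
  define \<zeta> where "\<zeta> i j z = (transpose (fst z) ** fst z) $ i $ j" for i j and z :: "(real^'n^'m) \<times> 'm set"
  have zm[measurable]: "\<zeta> i j \<in> borel_measurable MAS" for i j unfolding \<zeta>_def by measurable
  have zint: "integrable M (\<lambda>\<omega>. \<zeta> i j (AS \<omega>))" for i j
    using Zm_entry_int[of i j] by (simp add: \<zeta>_def Zm_AS)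
  have zeq: "real_cond_exp M G (\<lambda>\<omega>. \<zeta> i j (AS \<omega>)) \<omega> = Qm \<omega> $ i $ j" for i j \<omega>
    by (simp add: Qm_entry \<zeta>_def Zm_AS)
  have int1: "integrable M (\<lambda>\<omega>. \<Psi> i j (x \<omega>, Kf \<omega>) * \<zeta> i j (AS \<omega>))" for i j
    by (rule int_bounded_mult[OF zint _ Psib]) measurable
  have int2: "integrable M (\<lambda>\<omega>. \<Psi> i j (x \<omega>, Kf \<omega>) * Qm \<omega> $ i $ j)" for i j
  proof -
    have "integrable M (\<lambda>\<omega>. \<Psi> i j (x \<omega>, Kf \<omega>) * real_cond_exp M G (\<lambda>\<omega>. \<zeta> i j (AS \<omega>)) \<omega>)"
      by (rule int_bounded_mult[OF cond_int[OF zint[of i j]] _ Psib[of i j]]) measurable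
    then show ?thesis by (simp add: zeq)
  qed
  have e1: "\<Theta> (x \<omega>, Kf \<omega>) * (norm (A \<omega> *v \<Phi> (x \<omega>, Kf \<omega>)))\<^sup>2
      = (\<Sum>i\<in>UNIV. \<Sum>j\<in>UNIV. \<Psi> i j (x \<omega>, Kf \<omega>) * \<zeta> i j (AS \<omega>))" for \<omega>
    by (simp add: power2_norm_eq_inner inner_AA qf_expand \<Psi>_def \<zeta>_def AS_def sum_distrib_left mult_ac)
  have e2: "\<Theta> (x \<omega>, Kf \<omega>) * (\<Phi> (x \<omega>, Kf \<omega>) \<bullet> (Qm \<omega> *v \<Phi> (x \<omega>, Kf \<omega>)))
      = (\<Sum>i\<in>UNIV. \<Sum>j\<in>UNIV. \<Psi> i j (x \<omega>, Kf \<omega>) * Qm \<omega> $ i $ j)" for \<omega>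
    by (simp add: qf_expand \<Psi>_def sum_distrib_left mult_ac)
  show "integrable M (\<lambda>\<omega>. \<Theta> (x \<omega>, Kf \<omega>) * (norm (A \<omega> *v \<Phi> (x \<omega>, Kf \<omega>)))\<^sup>2)"
    unfolding e1 by (intro Bochner_Integration.integrable_sum int1)
  show "integrable M (\<lambda>\<omega>. \<Theta> (x \<omega>, Kf \<omega>) * (\<Phi> (x \<omega>, Kf \<omega>) \<bullet> (Qm \<omega> *v \<Phi> (x \<omega>, Kf \<omega>))))"
    unfolding e2 by (intro Bochner_Integration.integrable_sum int2)
  have m: "(\<integral>\<omega>. \<Psi> i j (x \<omega>, Kf \<omega>) * \<zeta> i j (AS \<omega>) \<partial>M) = (\<integral>\<omega>. \<Psi> i j (x \<omega>, Kf \<omega>) * Qm \<omega> $ i $ j \<partial>M)" for i j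
    using masterS[OF zm[of i j] zint[of i j] Psim[of i j] Psib[of i j]] by (simp add: zeq)
  show "(\<integral>\<omega>. \<Theta> (x \<omega>, Kf \<omega>) * (norm (A \<omega> *v \<Phi> (x \<omega>, Kf \<omega>)))\<^sup>2 \<partial>M)
       = (\<integral>\<omega>. \<Theta> (x \<omega>, Kf \<omega>) * (\<Phi> (x \<omega>, Kf \<omega>) \<bullet> (Qm \<omega> *v \<Phi> (x \<omega>, Kf \<omega>))) \<partial>M)"
    unfolding e1 e2
    by (simp add: Bochner_Integration.integral_sum int1 int2 m)
qed

lemma PSD:
  fixes \<Phi> :: "(real^'n) \<times> ('m set \<times> (real^'n^'m)) \<Rightarrow> real^'n"
  assumes Pm[measurable]: "\<Phi> \<in> borel_measurable (borel \<Otimes>\<^sub>M KS)"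
  shows "AE \<omega> in M. \<Phi> (x \<omega>, Kf \<omega>) \<bullet> (Qm \<omega> *v \<Phi> (x \<omega>, Kf \<omega>)) \<ge> 0"
proof -
  obtain q where qm[measurable]: "q \<in> borel_measurable KS" and q: "\<And>\<omega>. \<omega> \<in> space M \<Longrightarrow> Qm \<omega> = q (Kf \<omega>)"
    using Qm_DD by auto
  have c: "AE \<omega> in M. norm (\<Phi> (x \<omega>, Kf \<omega>)) \<le> real c \<longrightarrow> \<Phi> (x \<omega>, Kf \<omega>) \<bullet> (Qm \<omega> *v \<Phi> (x \<omega>, Kf \<omega>)) \<ge> 0"
    for c :: nat
  proof -
    define \<Theta> where "\<Theta> p = (if norm (\<Phi> p) \<le> real c \<and> \<Phi> p \<bullet> (q (snd p) *v \<Phi> p) < 0 then 1 else 0 :: real)" for p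
    have Tm[measurable]: "\<Theta> \<in> borel_measurable (borel \<Otimes>\<^sub>M KS)" unfolding \<Theta>_def by measurable
    have T1: "\<bar>\<Theta> p\<bar> \<le> 1" for p by (simp add: \<Theta>_def)
    have Tc: "\<Theta> p \<noteq> 0 \<Longrightarrow> norm (\<Phi> p) \<le> real c" for p by (simp add: \<Theta>_def split: if_splits)
    note qt = QT[OF Pm Tm T1 Tc]
    define g where "g = (\<lambda>\<omega>. \<Theta> (x \<omega>, Kf \<omega>) * (\<Phi> (x \<omega>, Kf \<omega>) \<bullet> (Qm \<omega> *v \<Phi> (x \<omega>, Kf \<omega>))))"
    have gint: "integrable M g" using qt(2) by (simp add: g_def)
    have gle: "g \<omega> \<le> 0" if "\<omega> \<in> space M" for \<omega>
      using that by (auto simp: g_def \<Theta>_def q)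
    have "0 \<le> (\<integral>\<omega>. \<Theta> (x \<omega>, Kf \<omega>) * (norm (A \<omega> *v \<Phi> (x \<omega>, Kf \<omega>)))\<^sup>2 \<partial>M)"
      by (rule integral_nonneg_AE) (auto simp: \<Theta>_def)
    then have "0 \<le> integral\<^sup>L M g" using qt(3) by (simp add: g_def)
    moreover have "0 \<le> integral\<^sup>L M (\<lambda>\<omega>. - g \<omega>)" by (rule integral_nonneg_AE) (use gle in auto)
    ultimately have "integral\<^sup>L M (\<lambda>\<omega>. - g \<omega>) = 0" by simp
    then have "AE \<omega> in M. - g \<omega> = 0"
      using integral_nonneg_eq_0_iff_AE[where f="\<lambda>\<omega>. - g \<omega>"] gint gle by auto
    then show ?thesis
    proof (rule AE_mp, intro AE_I2 impI)
      fix \<omega> assume \<omega>: "\<omega> \<in> space M" and g0: "- g \<omega> = 0" and n: "norm (\<Phi> (x \<omega>, Kf \<omega>)) \<le> real c"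
      show "\<Phi> (x \<omega>, Kf \<omega>) \<bullet> (Qm \<omega> *v \<Phi> (x \<omega>, Kf \<omega>)) \<ge> 0"
      proof (rule ccontr)
        assume "\<not> ?thesis"
        then have "g \<omega> < 0" using n \<omega> by (auto simp: g_def \<Theta>_def q)
        then show False using g0 by simp
      qed
    qed
  qed
  then have "AE \<omega> in M. \<forall>c::nat. norm (\<Phi> (x \<omega>, Kf \<omega>)) \<le> real c \<longrightarrow> \<Phi> (x \<omega>, Kf \<omega>) \<bullet> (Qm \<omega> *v \<Phi> (x \<omega>, Kf \<omega>)) \<ge> 0"
    by (subst AE_all_countable) (use c in blast)
  then show ?thesis
  proof eventually_elim
    case (elim \<omega>)
    then show ?case using real_nat_ceiling_ge[of "norm (\<Phi> (x \<omega>, Kf \<omega>))"] by blast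
  qed
qed

lemma sup_trunc: "(SUP c::nat. ennreal ((if t \<le> real c then 1 else 0) * v)) = ennreal v"
proof (rule antisym)
  show "(SUP c::nat. ennreal ((if t \<le> real c then 1 else 0) * v)) \<le> ennreal v"
  proof (rule SUP_least)
    fix c :: nat
    show "ennreal ((if t \<le> real c then 1 else 0) * v) \<le> ennreal v"
      by (cases "v \<ge> 0") (auto simp: ennreal_neg)
  qed
  have "ennreal v = ennreal ((if t \<le> real (nat \<lceil>t\<rceil>) then 1 else 0) * v)"
    using real_nat_ceiling_ge[of t] by simp
  also have "\<dots> \<le> (SUP c::nat. ennreal ((if t \<le> real c then 1 else 0) * v))"
    by (rule SUP_upper) simp
  finally show "ennreal v \<le> (SUP c::nat. ennreal ((if t \<le> real c then 1 else 0) * v))" .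
qed

lemma incseq_trunc: "incseq (\<lambda>c::nat. ennreal ((if t \<le> real c then 1 else 0) * v))"
  unfolding incseq_def
proof (intro allI impI)
  fix m n :: nat assume "m \<le> n"
  then show "ennreal ((if t \<le> real m then 1 else 0) * v) \<le> ennreal ((if t \<le> real n then 1 else 0) * v)"
    by (cases "v \<ge> 0") (auto simp: ennreal_neg)
qed

lemma QN:
  fixes \<Phi> :: "(real^'n) \<times> ('m set \<times> (real^'n^'m)) \<Rightarrow> real^'n"
  assumes Pm[measurable]: "\<Phi> \<in> borel_measurable (borel \<Otimes>\<^sub>M KS)"
  shows "(\<integral>\<^sup>+\<omega>. ennreal ((norm (A \<omega> *v \<Phi> (x \<omega>, Kf \<omega>)))\<^sup>2) \<partial>M)
       = (\<integral>\<^sup>+\<omega>. ennreal (\<Phi> (x \<omega>, Kf \<omega>) \<bullet> (Qm \<omega> *v \<Phi> (x \<omega>, Kf \<omega>))) \<partial>M)"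
proof -
  define \<Theta> where "\<Theta> c p = (if norm (\<Phi> p) \<le> real c then 1 else 0 :: real)" for c :: nat and p
  have Tm[measurable]: "\<Theta> c \<in> borel_measurable (borel \<Otimes>\<^sub>M KS)" for c unfolding \<Theta>_def by measurable
  have T1: "\<bar>\<Theta> c p\<bar> \<le> 1" for c p by (simp add: \<Theta>_def)
  have Tc: "\<Theta> c p \<noteq> 0 \<Longrightarrow> norm (\<Phi> p) \<le> real c" for c p by (simp add: \<Theta>_def split: if_splits)
  have psd: "AE \<omega> in M. \<Phi> (x \<omega>, Kf \<omega>) \<bullet> (Qm \<omega> *v \<Phi> (x \<omega>, Kf \<omega>)) \<ge> 0" by (rule PSD[OF Pm])
  have each: "(\<integral>\<^sup>+\<omega>. ennreal (\<Theta> c (x \<omega>, Kf \<omega>) * (norm (A \<omega> *v \<Phi> (x \<omega>, Kf \<omega>)))\<^sup>2) \<partial>M)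
      = (\<integral>\<^sup>+\<omega>. ennreal (\<Theta> c (x \<omega>, Kf \<omega>) * (\<Phi> (x \<omega>, Kf \<omega>) \<bullet> (Qm \<omega> *v \<Phi> (x \<omega>, Kf \<omega>)))) \<partial>M)" for c
  proof -
    note qt = QT[OF Pm Tm[of c] T1[of c] Tc[of c]]
    have "(\<integral>\<^sup>+\<omega>. ennreal (\<Theta> c (x \<omega>, Kf \<omega>) * (norm (A \<omega> *v \<Phi> (x \<omega>, Kf \<omega>)))\<^sup>2) \<partial>M)
        = ennreal (\<integral>\<omega>. \<Theta> c (x \<omega>, Kf \<omega>) * (norm (A \<omega> *v \<Phi> (x \<omega>, Kf \<omega>)))\<^sup>2 \<partial>M)"
      by (rule nn_integral_eq_integral[OF qt(1)]) (auto simp: \<Theta>_def)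
    also have "\<dots> = ennreal (\<integral>\<omega>. \<Theta> c (x \<omega>, Kf \<omega>) * (\<Phi> (x \<omega>, Kf \<omega>) \<bullet> (Qm \<omega> *v \<Phi> (x \<omega>, Kf \<omega>))) \<partial>M)"
      using qt(3) by simp
    also have "\<dots> = (\<integral>\<^sup>+\<omega>. ennreal (\<Theta> c (x \<omega>, Kf \<omega>) * (\<Phi> (x \<omega>, Kf \<omega>) \<bullet> (Qm \<omega> *v \<Phi> (x \<omega>, Kf \<omega>)))) \<partial>M)"
      by (rule nn_integral_eq_integral[OF qt(2), symmetric]) (use psd in \<open>auto simp: \<Theta>_def\<close>)
    finally show ?thesis .
  qed
  have lim: "(\<integral>\<^sup>+\<omega>. ennreal (f \<omega>) \<partial>M) = (SUP c. \<integral>\<^sup>+\<omega>. ennreal (\<Theta> c (x \<omega>, Kf \<omega>) * f \<omega>) \<partial>M)"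
    if [measurable]: "f \<in> borel_measurable M" for f
  proof -
    have "(\<integral>\<^sup>+\<omega>. ennreal (f \<omega>) \<partial>M) = (\<integral>\<^sup>+\<omega>. (SUP c. ennreal (\<Theta> c (x \<omega>, Kf \<omega>) * f \<omega>)) \<partial>M)"
      by (simp add: \<Theta>_def sup_trunc)
    also have "\<dots> = (SUP c. \<integral>\<^sup>+\<omega>. ennreal (\<Theta> c (x \<omega>, Kf \<omega>) * f \<omega>) \<partial>M)"
    proof (rule nn_integral_monotone_convergence_SUP)
      show "incseq (\<lambda>c \<omega>. ennreal (\<Theta> c (x \<omega>, Kf \<omega>) * f \<omega>))"
        using incseq_trunc unfolding \<Theta>_def incseq_def le_fun_def by blast
    qed measurable
    finally show ?thesis .
  qed
  show ?thesis
    by (subst lim, measurable, subst lim, measurable) (simp add: each)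
qed

lemma QI:
  fixes \<Phi> :: "(real^'n) \<times> ('m set \<times> (real^'n^'m)) \<Rightarrow> real^'n"
  assumes Pm[measurable]: "\<Phi> \<in> borel_measurable (borel \<Otimes>\<^sub>M KS)"
    and int: "integrable M (\<lambda>\<omega>. (norm (A \<omega> *v \<Phi> (x \<omega>, Kf \<omega>)))\<^sup>2)"
  shows "integrable M (\<lambda>\<omega>. \<Phi> (x \<omega>, Kf \<omega>) \<bullet> (Qm \<omega> *v \<Phi> (x \<omega>, Kf \<omega>)))"
    and "(\<integral>\<omega>. (norm (A \<omega> *v \<Phi> (x \<omega>, Kf \<omega>)))\<^sup>2 \<partial>M) = (\<integral>\<omega>. \<Phi> (x \<omega>, Kf \<omega>) \<bullet> (Qm \<omega> *v \<Phi> (x \<omega>, Kf \<omega>)) \<partial>M)"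
proof -
  have psd: "AE \<omega> in M. \<Phi> (x \<omega>, Kf \<omega>) \<bullet> (Qm \<omega> *v \<Phi> (x \<omega>, Kf \<omega>)) \<ge> 0" by (rule PSD[OF Pm])
  have e: "(\<integral>\<^sup>+\<omega>. ennreal ((norm (A \<omega> *v \<Phi> (x \<omega>, Kf \<omega>)))\<^sup>2) \<partial>M) = ennreal (\<integral>\<omega>. (norm (A \<omega> *v \<Phi> (x \<omega>, Kf \<omega>)))\<^sup>2 \<partial>M)"
    by (rule nn_integral_eq_integral[OF int]) auto
  have e2: "(\<integral>\<^sup>+\<omega>. ennreal (\<Phi> (x \<omega>, Kf \<omega>) \<bullet> (Qm \<omega> *v \<Phi> (x \<omega>, Kf \<omega>))) \<partial>M) = ennreal (\<integral>\<omega>. (norm (A \<omega> *v \<Phi> (x \<omega>, Kf \<omega>)))\<^sup>2 \<partial>M)"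
    using QN[OF Pm] e by simp
  show i: "integrable M (\<lambda>\<omega>. \<Phi> (x \<omega>, Kf \<omega>) \<bullet> (Qm \<omega> *v \<Phi> (x \<omega>, Kf \<omega>)))"
    by (rule integrableI_nonneg) (use psd e2 in auto)
  have "ennreal (\<integral>\<omega>. (norm (A \<omega> *v \<Phi> (x \<omega>, Kf \<omega>)))\<^sup>2 \<partial>M) = ennreal (\<integral>\<omega>. \<Phi> (x \<omega>, Kf \<omega>) \<bullet> (Qm \<omega> *v \<Phi> (x \<omega>, Kf \<omega>)) \<partial>M)"
    using e QN[OF Pm] nn_integral_eq_integral[OF i psd] by simp
  moreover have "0 \<le> (\<integral>\<omega>. \<Phi> (x \<omega>, Kf \<omega>) \<bullet> (Qm \<omega> *v \<Phi> (x \<omega>, Kf \<omega>)) \<partial>M)"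
    by (rule integral_nonneg_AE[OF psd])
  ultimately show "(\<integral>\<omega>. (norm (A \<omega> *v \<Phi> (x \<omega>, Kf \<omega>)))\<^sup>2 \<partial>M) = (\<integral>\<omega>. \<Phi> (x \<omega>, Kf \<omega>) \<bullet> (Qm \<omega> *v \<Phi> (x \<omega>, Kf \<omega>)) \<partial>M)"
    by simp
qed

end


lemma mv_bound: "norm (X *v v) \<le> real CARD('m) * real CARD('n) * norm X * norm v" for X :: "real^'n^'m"
proof -
  have "norm (X *v v) \<le> onorm ((*v) X) * norm v" by (rule onorm) simp
  also have "onorm ((*v) X) \<le> real CARD('m) * real CARD('n) * norm X"
    by (rule onorm_le_matrix_component) (use Finite_Cartesian_Product.norm_nth_le in \<open>metis abs_nth_le order_trans\<close>)
  then have "onorm ((*v) X) * norm v \<le> real CARD('m) * real CARD('n) * norm X * norm v"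
    by (rule mult_right_mono) simp
  finally show ?thesis .
qed

lemma qf_bound: "\<bar>u \<bullet> (X *v v)\<bar> \<le> real CARD('n) * real CARD('n) * norm X * norm u * norm v" for X :: "real^'n^'n"
proof -
  have "\<bar>u \<bullet> (X *v v)\<bar> \<le> norm u * norm (X *v v)" by (rule Cauchy_Schwarz_ineq2)
  also have "\<dots> \<le> norm u * (real CARD('n) * real CARD('n) * norm X * norm v)"
    by (rule mult_left_mono[OF mv_bound]) simp
  finally show ?thesis by (simp add: mult_ac)
qed

lemma norm_sq_sum: "(norm v)\<^sup>2 = (\<Sum>i\<in>UNIV. (v $ i)\<^sup>2)" for v :: "real^'n"
  unfolding power2_norm_eq_inner inner_vec_def by (simp add: power2_eq_square)

lemma le_1_sq: "t \<le> 1 + t\<^sup>2" for t :: real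
proof -
  have "0 \<le> (t - 1)\<^sup>2" by simp
  moreover have "(t - 1)\<^sup>2 = t\<^sup>2 - 2 * t + 1" by (simp add: power2_diff)
  moreover have "0 \<le> t\<^sup>2" by simp
  ultimately show ?thesis by linarith
qed

context msetup begin

lemma x_comp_int: "integrable M (\<lambda>\<omega>. x \<omega> $ i)"
proof (rule Bochner_Integration.integrable_bound[where f="\<lambda>\<omega>. 1 + (norm (x \<omega>))\<^sup>2"])
  show "integrable M (\<lambda>\<omega>. 1 + (norm (x \<omega>))\<^sup>2)" using x2 by simp
  show "(\<lambda>\<omega>. x \<omega> $ i) \<in> borel_measurable M" by measurable
  show "AE \<omega> in M. norm (x \<omega> $ i) \<le> norm (1 + (norm (x \<omega>))\<^sup>2)"
  proof (intro AE_I2)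
    fix \<omega>
    have a: "\<bar>x \<omega> $ i\<bar> \<le> norm (x \<omega>)" by (rule abs_nth_le)
    have "norm (x \<omega>) \<le> 1 + (norm (x \<omega>))\<^sup>2" by (rule le_1_sq)
    then show "norm (x \<omega> $ i) \<le> norm (1 + (norm (x \<omega>))\<^sup>2)" using a by simp
  qed
qed

lemma x_comp_sq_int: "integrable M (\<lambda>\<omega>. (x \<omega> $ i)\<^sup>2)"
proof (rule Bochner_Integration.integrable_bound[OF x2])
  show "(\<lambda>\<omega>. (x \<omega> $ i)\<^sup>2) \<in> borel_measurable M" by measurable
  show "AE \<omega> in M. norm ((x \<omega> $ i)\<^sup>2) \<le> norm ((norm (x \<omega>))\<^sup>2)"
    using abs_nth_le[of "x _" i] by (auto intro!: AE_I2 simp: abs_le_square_iff[symmetric])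
qed

lemma Ax_int: "integrable M (\<lambda>\<omega>. (norm (A \<omega> *v x \<omega>))\<^sup>2)"
proof (rule integrableI_bounded)
  show "(\<lambda>\<omega>. (norm (A \<omega> *v x \<omega>))\<^sup>2) \<in> borel_measurable M" by measurable
  define C where "C = real CARD('n) * real CARD('n)"
  have pw: "norm ((norm (A \<omega> *v x \<omega>))\<^sup>2) \<le> C * ((norm (x \<omega>))\<^sup>2 * norm (Zm \<omega>))" for \<omega>
  proof -
    have "(norm (A \<omega> *v x \<omega>))\<^sup>2 = x \<omega> \<bullet> (Zm \<omega> *v x \<omega>)"
      by (simp add: power2_norm_eq_inner inner_AA Zm_def)
    also have "\<dots> \<le> \<bar>x \<omega> \<bullet> (Zm \<omega> *v x \<omega>)\<bar>" by simp
    also have "\<dots> \<le> C * norm (Zm \<omega>) * norm (x \<omega>) * norm (x \<omega>)" unfolding C_def by (rule qf_bound)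
    finally show ?thesis by (simp add: power2_eq_square mult_ac)
  qed
  have le: "(\<integral>\<^sup>+\<omega>. ennreal (norm ((norm (A \<omega> *v x \<omega>))\<^sup>2)) \<partial>M) \<le> (\<integral>\<^sup>+\<omega>. ennreal C * (ennreal ((norm (x \<omega>))\<^sup>2) * ennreal (norm (Zm \<omega>))) \<partial>M)"
    by (rule nn_integral_mono) (use pw in \<open>simp add: ennreal_mult[symmetric] C_def\<close>)
  have e1: "(\<integral>\<^sup>+\<omega>. ennreal C * (ennreal ((norm (x \<omega>))\<^sup>2) * ennreal (norm (Zm \<omega>))) \<partial>M)
     = ennreal C * (\<integral>\<^sup>+\<omega>. ennreal ((norm (x \<omega>))\<^sup>2) * ennreal (norm (Zm \<omega>)) \<partial>M)"
    by (rule nn_integral_cmult) measurable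
  have e2: "(\<integral>\<^sup>+\<omega>. ennreal ((norm (x \<omega>))\<^sup>2) * ennreal (norm (Zm \<omega>)) \<partial>M)
      = (\<integral>\<^sup>+\<omega>. (\<lambda>\<xi>. ennreal ((norm \<xi>)\<^sup>2)) (x \<omega>) * (\<lambda>z. ennreal (norm (transpose (fst z) ** fst z))) (AS \<omega>) \<partial>M)"
    by (simp add: Zm_def AS_def)
  have e3: "\<dots> = (\<integral>\<^sup>+\<omega>. ennreal ((norm (x \<omega>))\<^sup>2) \<partial>M) * (\<integral>\<^sup>+\<omega>. ennreal (norm (transpose (fst (AS \<omega>)) ** fst (AS \<omega>))) \<partial>M)"
    by (rule IP) measurable
  have f1: "(\<integral>\<^sup>+\<omega>. ennreal ((norm (x \<omega>))\<^sup>2) \<partial>M) = ennreal (\<integral>\<omega>. (norm (x \<omega>))\<^sup>2 \<partial>M)"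
    by (rule nn_integral_eq_integral[OF x2]) auto
  have f2: "(\<integral>\<^sup>+\<omega>. ennreal (norm (transpose (fst (AS \<omega>)) ** fst (AS \<omega>))) \<partial>M) = ennreal (\<integral>\<omega>. norm (transpose (A \<omega>) ** A \<omega>) \<partial>M)"
    unfolding AS_def fst_conv by (rule nn_integral_eq_integral[OF AA]) auto
  have "(\<integral>\<^sup>+\<omega>. ennreal C * (ennreal ((norm (x \<omega>))\<^sup>2) * ennreal (norm (Zm \<omega>))) \<partial>M) < \<infinity>"
    unfolding e1 e2 e3 f1 f2 by (simp add: ennreal_mult_less_top ennreal_mult[symmetric])
  then show "(\<integral>\<^sup>+\<omega>. ennreal (norm ((norm (A \<omega> *v x \<omega>))\<^sup>2)) \<partial>M) < \<infinity>"
    using le by (rule le_less_trans[rotated])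
qed

lemma PSD':
  fixes \<Phi> :: "(real^'n) \<times> ('m set \<times> (real^'n^'m)) \<Rightarrow> real^'n"
  assumes "\<Phi> \<in> borel_measurable (borel \<Otimes>\<^sub>M KS)" "\<And>\<omega>. \<omega> \<in> space M \<Longrightarrow> \<phi> \<omega> = \<Phi> (x \<omega>, Kf \<omega>)"
  shows "AE \<omega> in M. \<phi> \<omega> \<bullet> (Qm \<omega> *v \<phi> \<omega>) \<ge> 0"
proof (rule AE_mp[OF PSD[OF assms(1)]])
  show "AE \<omega> in M. 0 \<le> \<Phi> (x \<omega>, Kf \<omega>) \<bullet> (Qm \<omega> *v \<Phi> (x \<omega>, Kf \<omega>)) \<longrightarrow> 0 \<le> \<phi> \<omega> \<bullet> (Qm \<omega> *v \<phi> \<omega>)"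
    by (rule AE_I2) (simp add: assms(2))
qed

lemma QN':
  fixes \<Phi> :: "(real^'n) \<times> ('m set \<times> (real^'n^'m)) \<Rightarrow> real^'n"
  assumes "\<Phi> \<in> borel_measurable (borel \<Otimes>\<^sub>M KS)" "\<And>\<omega>. \<omega> \<in> space M \<Longrightarrow> \<phi> \<omega> = \<Phi> (x \<omega>, Kf \<omega>)"
  shows "(\<integral>\<^sup>+\<omega>. ennreal ((norm (A \<omega> *v \<phi> \<omega>))\<^sup>2) \<partial>M) = (\<integral>\<^sup>+\<omega>. ennreal (\<phi> \<omega> \<bullet> (Qm \<omega> *v \<phi> \<omega>)) \<partial>M)"
proof -
  have "(\<integral>\<^sup>+\<omega>. ennreal ((norm (A \<omega> *v \<phi> \<omega>))\<^sup>2) \<partial>M) = (\<integral>\<^sup>+\<omega>. ennreal ((norm (A \<omega> *v \<Phi> (x \<omega>, Kf \<omega>)))\<^sup>2) \<partial>M)"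
    by (rule nn_integral_cong) (simp add: assms(2))
  also have "\<dots> = (\<integral>\<^sup>+\<omega>. ennreal (\<Phi> (x \<omega>, Kf \<omega>) \<bullet> (Qm \<omega> *v \<Phi> (x \<omega>, Kf \<omega>))) \<partial>M)"
    by (rule QN[OF assms(1)])
  also have "\<dots> = (\<integral>\<^sup>+\<omega>. ennreal (\<phi> \<omega> \<bullet> (Qm \<omega> *v \<phi> \<omega>)) \<partial>M)"
    by (rule nn_integral_cong) (simp add: assms(2))
  finally show ?thesis .
qed

lemma QI':
  fixes \<Phi> :: "(real^'n) \<times> ('m set \<times> (real^'n^'m)) \<Rightarrow> real^'n"
  assumes "\<Phi> \<in> borel_measurable (borel \<Otimes>\<^sub>M KS)" "\<And>\<omega>. \<omega> \<in> space M \<Longrightarrow> \<phi> \<omega> = \<Phi> (x \<omega>, Kf \<omega>)"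
    and int: "integrable M (\<lambda>\<omega>. (norm (A \<omega> *v \<phi> \<omega>))\<^sup>2)"
  shows "integrable M (\<lambda>\<omega>. \<phi> \<omega> \<bullet> (Qm \<omega> *v \<phi> \<omega>))"
    and "(\<integral>\<omega>. (norm (A \<omega> *v \<phi> \<omega>))\<^sup>2 \<partial>M) = (\<integral>\<omega>. \<phi> \<omega> \<bullet> (Qm \<omega> *v \<phi> \<omega>) \<partial>M)"
proof -
  have c1: "integrable M (\<lambda>\<omega>. (norm (A \<omega> *v \<phi> \<omega>))\<^sup>2) \<longleftrightarrow> integrable M (\<lambda>\<omega>. (norm (A \<omega> *v \<Phi> (x \<omega>, Kf \<omega>)))\<^sup>2)"
    by (rule Bochner_Integration.integrable_cong) (simp_all add: assms(2))
  have c2: "integrable M (\<lambda>\<omega>. \<phi> \<omega> \<bullet> (Qm \<omega> *v \<phi> \<omega>)) \<longleftrightarrow> integrable M (\<lambda>\<omega>. \<Phi> (x \<omega>, Kf \<omega>) \<bullet> (Qm \<omega> *v \<Phi> (x \<omega>, Kf \<omega>)))"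
    by (rule Bochner_Integration.integrable_cong) (simp_all add: assms(2))
  note q = QI[OF assms(1) int[unfolded c1]]
  show "integrable M (\<lambda>\<omega>. \<phi> \<omega> \<bullet> (Qm \<omega> *v \<phi> \<omega>))" using q(1) c2 by simp
  have "(\<integral>\<omega>. (norm (A \<omega> *v \<phi> \<omega>))\<^sup>2 \<partial>M) = (\<integral>\<omega>. (norm (A \<omega> *v \<Phi> (x \<omega>, Kf \<omega>)))\<^sup>2 \<partial>M)"
    by (rule Bochner_Integration.integral_cong) (simp_all add: assms(2))
  also have "\<dots> = (\<integral>\<omega>. \<Phi> (x \<omega>, Kf \<omega>) \<bullet> (Qm \<omega> *v \<Phi> (x \<omega>, Kf \<omega>)) \<partial>M)" by (rule q(2))
  also have "\<dots> = (\<integral>\<omega>. \<phi> \<omega> \<bullet> (Qm \<omega> *v \<phi> \<omega>) \<partial>M)"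
    by (rule Bochner_Integration.integral_cong) (simp_all add: assms(2))
  finally show "(\<integral>\<omega>. (norm (A \<omega> *v \<phi> \<omega>))\<^sup>2 \<partial>M) = (\<integral>\<omega>. \<phi> \<omega> \<bullet> (Qm \<omega> *v \<phi> \<omega>) \<partial>M)" .
qed

definition "ob = (\<lambda>p::(real^'n) \<times> ('m set \<times> (real^'n^'m)). (fst (snd p), snd (snd p) *v fst p, snd (snd p)))"

lemma obs_ob: "obs x A S \<omega> = ob (x \<omega>, Kf \<omega>)"
  by (simp add: obs_def ob_def Kf_def row_select_mv)

lemma ob_meas[measurable]: "ob \<in> measurable (borel \<Otimes>\<^sub>M KS) obs_space"
  unfolding ob_def obs_space_def by (simp add: borel_prod[symmetric])

lemma obs_meas[measurable]: "obs x A S \<in> measurable M obs_space"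
proof -
  have "obs x A S = (\<lambda>\<omega>. ob (x \<omega>, Kf \<omega>))" by (simp add: fun_eq_iff obs_ob)
  also have "\<dots> \<in> measurable M obs_space" by measurable
  finally show ?thesis .
qed

definition "Ob = F_obs M x A S"

lemma O_eq: "Ob = vimage_algebra (space M) (obs x A S) obs_space"
  by (simp add: Ob_def F_obs_def gen_sigma_def)

lemma O_sub: "sigma_finite_subalgebra M Ob"
  unfolding O_eq by (rule sfs_vimage) measurable

lemma O_meas_comp:
  assumes "h \<in> measurable obs_space L" shows "(\<lambda>\<omega>. h (obs x A S \<omega>)) \<in> measurable Ob L"
  unfolding O_eq by (rule measurable_vimage_comp) (use assms in \<open>auto simp: space_pair_measure obs_space_def\<close>)

lemma Kf_measO: "Kf \<in> measurable Ob KS"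
proof -
  have "(\<lambda>\<omega>. (\<lambda>z. (fst z, snd (snd z))) (obs x A S \<omega>)) \<in> measurable Ob KS"
    by (rule O_meas_comp) (simp add: obs_space_def borel_prod[symmetric])
  moreover have "(\<lambda>\<omega>. (\<lambda>z. (fst z, snd (snd z))) (obs x A S \<omega>)) = Kf"
    by (simp add: fun_eq_iff obs_def Kf_def)
  ultimately show ?thesis by simp
qed

lemma G_sub_O: "subalgebra Ob G"
  unfolding subalgebra_def
proof
  show "space G = space Ob" by (simp add: G_eq O_eq)
  have "Kf \<in> space M \<rightarrow> space KS" by (simp add: space_pair_measure)
  then show "sets G \<subseteq> sets Ob"
    unfolding G_eq sets_vimage_algebra2[OF \<open>Kf \<in> space M \<rightarrow> space KS\<close>]
    using measurable_sets[OF Kf_measO] by (auto simp: O_eq)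
qed

lemma GO_meas: "f \<in> measurable G N \<Longrightarrow> f \<in> measurable Ob N"
  by (rule measurable_from_subalg[OF G_sub_O])

lemma Qm_measO: "Qm \<in> borel_measurable Ob" by (rule GO_meas[OF Qm_measG])

definition "xh = vcond_exp M Ob x"

lemma xh_comp: "xh \<omega> $ i = real_cond_exp M Ob (\<lambda>\<omega>. x \<omega> $ i) \<omega>"
  by (simp add: xh_def vcond_exp_def)

lemma xh_measO: "xh \<in> borel_measurable Ob"
proof -
  have "xh = (\<lambda>\<omega>. \<chi> i. real_cond_exp M Ob (\<lambda>\<omega>. x \<omega> $ i) \<omega>)" by (simp add: xh_def vcond_exp_def)
  also have "\<dots> \<in> borel_measurable Ob" by (intro bm_vec_lambda borel_measurable_cond_exp)
  finally show ?thesis .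
qed

lemma xh_meas[measurable]: "xh \<in> borel_measurable M"
proof -
  interpret Ob: sigma_finite_subalgebra M Ob by (rule O_sub)
  show ?thesis using measurable_from_subalg[OF Ob.subalg xh_measO] .
qed

definition "hX = (SOME h. h \<in> borel_measurable obs_space \<and> (\<forall>\<omega>\<in>space M. xh \<omega> = h (obs x A S \<omega>)))"

lemma hX: "hX \<in> borel_measurable obs_space" "\<And>\<omega>. \<omega> \<in> space M \<Longrightarrow> xh \<omega> = hX (obs x A S \<omega>)"
proof -
  have "\<exists>h\<in>borel_measurable obs_space. \<forall>\<omega>\<in>space M. xh \<omega> = h (obs x A S \<omega>)"
    by (rule DD_rvec) (use xh_measO in \<open>auto simp: O_eq space_pair_measure obs_space_def\<close>)
  then have "hX \<in> borel_measurable obs_space \<and> (\<forall>\<omega>\<in>space M. xh \<omega> = hX (obs x A S \<omega>))"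
    unfolding hX_def by (rule someI2_bex) auto
  then show "hX \<in> borel_measurable obs_space" "\<And>\<omega>. \<omega> \<in> space M \<Longrightarrow> xh \<omega> = hX (obs x A S \<omega>)" by auto
qed

lemma hX_meas[measurable]: "hX \<in> borel_measurable obs_space" by (rule hX(1))

definition "Xh = (\<lambda>p. hX (ob p))"

lemma Xh_meas[measurable]: "Xh \<in> borel_measurable (borel \<Otimes>\<^sub>M KS)" unfolding Xh_def by measurable

lemma xh_Xh: "\<omega> \<in> space M \<Longrightarrow> xh \<omega> = Xh (x \<omega>, Kf \<omega>)"
  by (simp add: hX(2) Xh_def obs_ob)

lemma xh_comp_sq_int: "integrable M (\<lambda>\<omega>. (xh \<omega> $ i)\<^sup>2)"
proof -
  interpret Ob: sigma_finite_subalgebra M Ob by (rule O_sub)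
  have "integrable M (\<lambda>\<omega>. (real_cond_exp M Ob (\<lambda>\<omega>. x \<omega> $ i) \<omega>)\<^sup>2)"
    by (rule Ob.integrable_convex_cond_exp[OF x_comp_int, where I=UNIV])
       (auto simp: x_comp_sq_int convex_power2)
  then show ?thesis by (simp add: xh_comp)
qed

lemma xh_sq_int: "integrable M (\<lambda>\<omega>. (norm (xh \<omega>))\<^sup>2)"
  unfolding norm_sq_sum by (intro Bochner_Integration.integrable_sum xh_comp_sq_int)

end


lemma qf_sym:
  assumes "transpose Q = Q" shows "b \<bullet> (Q *v a) = a \<bullet> (Q *v (b::real^'n))"
proof -
  have "b \<bullet> (Q *v a) = (transpose Q *v b) \<bullet> a" by (rule inner_mv_transpose)
  also have "transpose Q *v b = Q *v b" using assms by (simp only:)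
  also have "(Q *v b) \<bullet> a = a \<bullet> (Q *v b)" by (rule inner_commute)
  finally show ?thesis .
qed

lemma qf_diff: "transpose Q = Q \<Longrightarrow> (a - b) \<bullet> (Q *v (a - b)) = a \<bullet> (Q *v a) - 2 * (a \<bullet> (Q *v b)) + b \<bullet> (Q *v (b::real^'n))"
  using qf_sym[of Q b a] by (simp add: matrix_vector_mult_diff_distrib inner_diff_left inner_diff_right)

lemma qf_add: "transpose Q = Q \<Longrightarrow> (a + b) \<bullet> (Q *v (a + b)) = a \<bullet> (Q *v a) + 2 * (a \<bullet> (Q *v b)) + b \<bullet> (Q *v (b::real^'n))"
  using qf_sym[of Q b a] by (simp add: matrix_vector_right_distrib inner_add_left inner_add_right)

lemma qf_as_sum:
  assumes "transpose Q = Q" shows "a \<bullet> (Q *v b) = (\<Sum>j\<in>UNIV. (Q *v a) $ j * b $ j)"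
proof -
  have "a \<bullet> (Q *v b) = (transpose Q *v a) \<bullet> b" by (rule inner_mv_transpose)
  also have "transpose Q *v a = Q *v a" using assms by (simp only:)
  finally show ?thesis by (simp add: inner_vec_def)
qed

context msetup begin

lemma e_int: "integrable M (\<lambda>\<omega>. (norm (A \<omega> *v (xh \<omega> - x \<omega>)))\<^sup>2)"
proof -
  interpret Ob: sigma_finite_subalgebra M Ob by (rule O_sub)
  define \<Phi>e where "\<Phi>e = (\<lambda>p. Xh p - fst p)"
  have \<Phi>em[measurable]: "\<Phi>e \<in> borel_measurable (borel \<Otimes>\<^sub>M KS)" unfolding \<Phi>e_def by measurable
  have e_eq: "\<And>\<omega>. \<omega> \<in> space M \<Longrightarrow> xh \<omega> - x \<omega> = \<Phi>e (x \<omega>, Kf \<omega>)" by (simp add: \<Phi>e_def xh_Xh)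
  have fstm: "(fst :: (real^'n) \<times> ('m set \<times> (real^'n^'m)) \<Rightarrow> real^'n) \<in> borel_measurable (borel \<Otimes>\<^sub>M KS)" by measurable
  define C where "C = real CARD('n) * real CARD('n)"
  have C0: "0 \<le> C" by (simp add: C_def)
  define t where "t \<omega> = max (norm (Qm \<omega>)) (norm (xh \<omega>))" for \<omega>
  define T where "T c \<omega> = (if t \<omega> \<le> real c then 1 else 0 :: real)" for c :: nat and \<omega>
  have Qm_O[measurable]: "Qm \<in> borel_measurable Ob" by (rule Qm_measO)
  have xh_O[measurable]: "xh \<in> borel_measurable Ob" by (rule xh_measO)
  have TO[measurable]: "T c \<in> borel_measurable Ob" for c unfolding T_def t_def by measurable
  have TM[measurable]: "T c \<in> borel_measurable M" for c unfolding T_def t_def by measurable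
  have key: "(\<integral>\<^sup>+\<omega>. ennreal (T c \<omega> * ((xh \<omega> - x \<omega>) \<bullet> (Qm \<omega> *v (xh \<omega> - x \<omega>)))) \<partial>M)
      \<le> (\<integral>\<^sup>+\<omega>. ennreal (x \<omega> \<bullet> (Qm \<omega> *v x \<omega>)) \<partial>M)" for c
  proof -
    define f where "f j \<omega> = T c \<omega> * (Qm \<omega> *v xh \<omega>) $ j" for j \<omega>
    have fO[measurable]: "f j \<in> borel_measurable Ob" for j unfolding f_def by measurable
    have fM[measurable]: "f j \<in> borel_measurable M" for j unfolding f_def by measurable
    have fb: "\<bar>f j \<omega>\<bar> \<le> C * real c * real c" for j \<omega>
    proof (cases "t \<omega> \<le> real c")
      case True
      then have q: "norm (Qm \<omega>) \<le> real c" and h: "norm (xh \<omega>) \<le> real c" by (auto simp: t_def)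
      have "\<bar>(Qm \<omega> *v xh \<omega>) $ j\<bar> \<le> norm (Qm \<omega> *v xh \<omega>)" by (rule abs_nth_le)
      also have "\<dots> \<le> C * norm (Qm \<omega>) * norm (xh \<omega>)" unfolding C_def by (rule mv_bound)
      also have "\<dots> \<le> C * real c * real c"
        by (intro mult_mono mult_left_mono q h C0) (auto intro: mult_nonneg_nonneg C0)
      finally show ?thesis using True by (simp add: f_def T_def)
    next
      case False then show ?thesis using C0 by (simp add: f_def T_def)
    qed
    have fx: "integrable M (\<lambda>\<omega>. f j \<omega> * x \<omega> $ j)" for j
      by (rule int_bounded_mult[OF x_comp_int _ fb]) measurable
    have fxh: "integrable M (\<lambda>\<omega>. f j \<omega> * xh \<omega> $ j)" for j
      using Ob.real_cond_exp_intg(1)[OF fx fO] by (simp add: xh_comp)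
    have fxeq: "(\<integral>\<omega>. f j \<omega> * xh \<omega> $ j \<partial>M) = (\<integral>\<omega>. f j \<omega> * x \<omega> $ j \<partial>M)" for j
      using Ob.real_cond_exp_intg(2)[OF fx fO] by (simp add: xh_comp)
    have s1: "T c \<omega> * (xh \<omega> \<bullet> (Qm \<omega> *v x \<omega>)) = (\<Sum>j\<in>UNIV. f j \<omega> * x \<omega> $ j)" for \<omega>
      by (simp add: qf_as_sum[OF Qm_transpose] f_def sum_distrib_left mult_ac)
    have s2: "T c \<omega> * (xh \<omega> \<bullet> (Qm \<omega> *v xh \<omega>)) = (\<Sum>j\<in>UNIV. f j \<omega> * xh \<omega> $ j)" for \<omega>
      by (simp add: qf_as_sum[OF Qm_transpose] f_def sum_distrib_left mult_ac)
    have i1: "integrable M (\<lambda>\<omega>. T c \<omega> * (xh \<omega> \<bullet> (Qm \<omega> *v x \<omega>)))"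
      unfolding s1 by (intro Bochner_Integration.integrable_sum fx)
    have i2: "integrable M (\<lambda>\<omega>. T c \<omega> * (xh \<omega> \<bullet> (Qm \<omega> *v xh \<omega>)))"
      unfolding s2 by (intro Bochner_Integration.integrable_sum fxh)
    have eq12: "(\<integral>\<omega>. T c \<omega> * (xh \<omega> \<bullet> (Qm \<omega> *v x \<omega>)) \<partial>M) = (\<integral>\<omega>. T c \<omega> * (xh \<omega> \<bullet> (Qm \<omega> *v xh \<omega>)) \<partial>M)"
      unfolding s1 s2 by (simp add: Bochner_Integration.integral_sum fx fxh fxeq)
    have i3: "integrable M (\<lambda>\<omega>. T c \<omega> * (x \<omega> \<bullet> (Qm \<omega> *v x \<omega>)))"
    proof (rule Bochner_Integration.integrable_bound[where f="\<lambda>\<omega>. C * real c * (norm (x \<omega>))\<^sup>2"])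
      show "integrable M (\<lambda>\<omega>. C * real c * (norm (x \<omega>))\<^sup>2)" using x2 by simp
      show "(\<lambda>\<omega>. T c \<omega> * (x \<omega> \<bullet> (Qm \<omega> *v x \<omega>))) \<in> borel_measurable M" by measurable
      show "AE \<omega> in M. norm (T c \<omega> * (x \<omega> \<bullet> (Qm \<omega> *v x \<omega>))) \<le> norm (C * real c * (norm (x \<omega>))\<^sup>2)"
      proof (intro AE_I2)
        fix \<omega>
        show "norm (T c \<omega> * (x \<omega> \<bullet> (Qm \<omega> *v x \<omega>))) \<le> norm (C * real c * (norm (x \<omega>))\<^sup>2)"
        proof (cases "t \<omega> \<le> real c")
          case True
          then have q: "norm (Qm \<omega>) \<le> real c" by (auto simp: t_def)
          have "\<bar>x \<omega> \<bullet> (Qm \<omega> *v x \<omega>)\<bar> \<le> C * norm (Qm \<omega>) * norm (x \<omega>) * norm (x \<omega>)"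
            unfolding C_def by (rule qf_bound)
          also have "\<dots> \<le> C * real c * norm (x \<omega>) * norm (x \<omega>)"
            by (intro mult_right_mono mult_left_mono q C0) auto
          finally show ?thesis using True C0 by (simp add: T_def power2_eq_square mult_ac)
        next
          case False then show ?thesis by (simp add: T_def)
        qed
      qed
    qed
    have pe: "T c \<omega> * ((xh \<omega> - x \<omega>) \<bullet> (Qm \<omega> *v (xh \<omega> - x \<omega>)))
      = T c \<omega> * (xh \<omega> \<bullet> (Qm \<omega> *v xh \<omega>)) - 2 * (T c \<omega> * (xh \<omega> \<bullet> (Qm \<omega> *v x \<omega>))) + T c \<omega> * (x \<omega> \<bullet> (Qm \<omega> *v x \<omega>))" for \<omega>
      unfolding qf_diff[OF Qm_transpose] by (simp add: algebra_simps)
    have ie: "integrable M (\<lambda>\<omega>. T c \<omega> * ((xh \<omega> - x \<omega>) \<bullet> (Qm \<omega> *v (xh \<omega> - x \<omega>))))"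
      unfolding pe by (intro Bochner_Integration.integrable_add Bochner_Integration.integrable_diff integrable_mult_right i1 i2 i3)
    have ieq: "(\<integral>\<omega>. T c \<omega> * ((xh \<omega> - x \<omega>) \<bullet> (Qm \<omega> *v (xh \<omega> - x \<omega>))) \<partial>M)
       = (\<integral>\<omega>. T c \<omega> * (x \<omega> \<bullet> (Qm \<omega> *v x \<omega>)) \<partial>M) - (\<integral>\<omega>. T c \<omega> * (xh \<omega> \<bullet> (Qm \<omega> *v xh \<omega>)) \<partial>M)"
    proof -
      have "(\<integral>\<omega>. T c \<omega> * (xh \<omega> \<bullet> (Qm \<omega> *v xh \<omega>)) - 2 * (T c \<omega> * (xh \<omega> \<bullet> (Qm \<omega> *v x \<omega>))) + T c \<omega> * (x \<omega> \<bullet> (Qm \<omega> *v x \<omega>)) \<partial>M)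
        = (\<integral>\<omega>. T c \<omega> * (xh \<omega> \<bullet> (Qm \<omega> *v xh \<omega>)) - 2 * (T c \<omega> * (xh \<omega> \<bullet> (Qm \<omega> *v x \<omega>))) \<partial>M) + (\<integral>\<omega>. T c \<omega> * (x \<omega> \<bullet> (Qm \<omega> *v x \<omega>)) \<partial>M)"
        by (intro Bochner_Integration.integral_add Bochner_Integration.integrable_diff integrable_mult_right i1 i2 i3)
      also have "(\<integral>\<omega>. T c \<omega> * (xh \<omega> \<bullet> (Qm \<omega> *v xh \<omega>)) - 2 * (T c \<omega> * (xh \<omega> \<bullet> (Qm \<omega> *v x \<omega>))) \<partial>M)
        = (\<integral>\<omega>. T c \<omega> * (xh \<omega> \<bullet> (Qm \<omega> *v xh \<omega>)) \<partial>M) - (\<integral>\<omega>. 2 * (T c \<omega> * (xh \<omega> \<bullet> (Qm \<omega> *v x \<omega>))) \<partial>M)"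
        by (intro Bochner_Integration.integral_diff integrable_mult_right i1 i2)
      also have "(\<integral>\<omega>. 2 * (T c \<omega> * (xh \<omega> \<bullet> (Qm \<omega> *v x \<omega>))) \<partial>M) = 2 * (\<integral>\<omega>. T c \<omega> * (xh \<omega> \<bullet> (Qm \<omega> *v x \<omega>)) \<partial>M)"
        by (rule integral_mult_right_zero)
      finally show ?thesis unfolding pe eq12 by linarith
    qed
    have psd_h: "AE \<omega> in M. xh \<omega> \<bullet> (Qm \<omega> *v xh \<omega>) \<ge> 0" by (rule PSD'[OF Xh_meas xh_Xh])
    have psd_e: "AE \<omega> in M. (xh \<omega> - x \<omega>) \<bullet> (Qm \<omega> *v (xh \<omega> - x \<omega>)) \<ge> 0" by (rule PSD'[OF \<Phi>em e_eq])
    have psd_x: "AE \<omega> in M. x \<omega> \<bullet> (Qm \<omega> *v x \<omega>) \<ge> 0" by (rule PSD'[OF fstm]) simp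
    have hnn: "0 \<le> (\<integral>\<omega>. T c \<omega> * (xh \<omega> \<bullet> (Qm \<omega> *v xh \<omega>)) \<partial>M)"
      by (rule integral_nonneg_AE) (use psd_h in \<open>eventually_elim, simp add: T_def\<close>)
    have "(\<integral>\<^sup>+\<omega>. ennreal (T c \<omega> * ((xh \<omega> - x \<omega>) \<bullet> (Qm \<omega> *v (xh \<omega> - x \<omega>)))) \<partial>M)
        = ennreal (\<integral>\<omega>. T c \<omega> * ((xh \<omega> - x \<omega>) \<bullet> (Qm \<omega> *v (xh \<omega> - x \<omega>))) \<partial>M)"
      by (rule nn_integral_eq_integral[OF ie]) (use psd_e in \<open>eventually_elim, simp add: T_def\<close>)
    also have "\<dots> \<le> ennreal (\<integral>\<omega>. T c \<omega> * (x \<omega> \<bullet> (Qm \<omega> *v x \<omega>)) \<partial>M)"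
      using ieq hnn by (intro ennreal_leI) simp
    also have "\<dots> = (\<integral>\<^sup>+\<omega>. ennreal (T c \<omega> * (x \<omega> \<bullet> (Qm \<omega> *v x \<omega>))) \<partial>M)"
      by (rule nn_integral_eq_integral[OF i3, symmetric]) (use psd_x in \<open>eventually_elim, simp add: T_def\<close>)
    also have "\<dots> \<le> (\<integral>\<^sup>+\<omega>. ennreal (x \<omega> \<bullet> (Qm \<omega> *v x \<omega>)) \<partial>M)"
      by (rule nn_integral_mono) (auto simp: T_def ennreal_neg)
    finally show ?thesis .
  qed
  have sup: "(\<integral>\<^sup>+\<omega>. ennreal ((xh \<omega> - x \<omega>) \<bullet> (Qm \<omega> *v (xh \<omega> - x \<omega>))) \<partial>M)
      = (SUP c. \<integral>\<^sup>+\<omega>. ennreal (T c \<omega> * ((xh \<omega> - x \<omega>) \<bullet> (Qm \<omega> *v (xh \<omega> - x \<omega>)))) \<partial>M)"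
  proof -
    have "(\<integral>\<^sup>+\<omega>. ennreal ((xh \<omega> - x \<omega>) \<bullet> (Qm \<omega> *v (xh \<omega> - x \<omega>))) \<partial>M)
       = (\<integral>\<^sup>+\<omega>. (SUP c. ennreal (T c \<omega> * ((xh \<omega> - x \<omega>) \<bullet> (Qm \<omega> *v (xh \<omega> - x \<omega>))))) \<partial>M)"
      by (simp add: T_def sup_trunc)
    also have "\<dots> = (SUP c. \<integral>\<^sup>+\<omega>. ennreal (T c \<omega> * ((xh \<omega> - x \<omega>) \<bullet> (Qm \<omega> *v (xh \<omega> - x \<omega>)))) \<partial>M)"
    proof (rule nn_integral_monotone_convergence_SUP)
      show "incseq (\<lambda>c \<omega>. ennreal (T c \<omega> * ((xh \<omega> - x \<omega>) \<bullet> (Qm \<omega> *v (xh \<omega> - x \<omega>)))))"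
        using incseq_trunc unfolding T_def incseq_def le_fun_def by blast
    qed measurable
    finally show ?thesis .
  qed
  have xQx: "(\<integral>\<^sup>+\<omega>. ennreal (x \<omega> \<bullet> (Qm \<omega> *v x \<omega>)) \<partial>M) < \<infinity>"
  proof -
    have "(\<integral>\<^sup>+\<omega>. ennreal (x \<omega> \<bullet> (Qm \<omega> *v x \<omega>)) \<partial>M) = (\<integral>\<^sup>+\<omega>. ennreal ((norm (A \<omega> *v x \<omega>))\<^sup>2) \<partial>M)"
      by (rule QN'[OF fstm, symmetric]) simp
    also have "\<dots> = ennreal (\<integral>\<omega>. (norm (A \<omega> *v x \<omega>))\<^sup>2 \<partial>M)"
      by (rule nn_integral_eq_integral[OF Ax_int]) auto
    finally show ?thesis by simp
  qed
  have "(\<integral>\<^sup>+\<omega>. ennreal ((xh \<omega> - x \<omega>) \<bullet> (Qm \<omega> *v (xh \<omega> - x \<omega>))) \<partial>M) \<le> (\<integral>\<^sup>+\<omega>. ennreal (x \<omega> \<bullet> (Qm \<omega> *v x \<omega>)) \<partial>M)"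
    unfolding sup by (rule SUP_least) (rule key)
  then have fin: "(\<integral>\<^sup>+\<omega>. ennreal ((norm (A \<omega> *v (xh \<omega> - x \<omega>)))\<^sup>2) \<partial>M) < \<infinity>"
    using xQx QN'[OF \<Phi>em e_eq] by simp
  show ?thesis
    by (rule integrableI_bounded) (use fin in simp_all)
qed

end


lemma sq_add_le: "(norm (a + b))\<^sup>2 \<le> 2 * (norm a)\<^sup>2 + 2 * (norm (b::'a::real_normed_vector))\<^sup>2"
proof -
  have "norm (a + b) \<le> norm a + norm b" by (rule norm_triangle_ineq)
  then have "(norm (a + b))\<^sup>2 \<le> (norm a + norm b)\<^sup>2" by (rule power_mono) simp
  also have "\<dots> \<le> 2 * (norm a)\<^sup>2 + 2 * (norm b)\<^sup>2"
  proof -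
    have "0 \<le> (norm a - norm b)\<^sup>2" by simp
    then show ?thesis by (simp add: power2_sum power2_diff)
  qed
  finally show ?thesis .
qed

lemma sq_diff_le: "(norm (a - b))\<^sup>2 \<le> 2 * (norm a)\<^sup>2 + 2 * (norm (b::'a::real_normed_vector))\<^sup>2"
  using sq_add_le[of a "- b"] by simp

lemma polar: "(norm (a + b))\<^sup>2 - (norm (a - b))\<^sup>2 = 4 * (a \<bullet> (b::'a::real_inner))"
  by (simp add: power2_norm_eq_inner inner_add_left inner_add_right inner_diff_left inner_diff_right inner_commute)

lemma sq_sum3: "(norm (a + b))\<^sup>2 = (norm a)\<^sup>2 + 2 * (a \<bullet> b) + (norm (b::'a::real_inner))\<^sup>2"
  by (simp add: power2_norm_eq_inner inner_add_left inner_add_right inner_commute)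

lemma qf_cs:
  assumes "transpose Q = Q" "0 \<le> (a + b) \<bullet> (Q *v (a + b))" "0 \<le> (a - b) \<bullet> (Q *v (a - (b::real^'n)))"
  shows "\<bar>a \<bullet> (Q *v b)\<bar> \<le> (a \<bullet> (Q *v a) + b \<bullet> (Q *v b)) / 2"
proof -
  have aux: "0 \<le> p + 2 * r + q \<Longrightarrow> 0 \<le> p - 2 * r + q \<Longrightarrow> \<bar>r\<bar> \<le> (p + q) / 2" for p q r :: real
    by (simp add: abs_le_iff)
  show ?thesis
    using assms(2,3) unfolding qf_add[OF assms(1)] qf_diff[OF assms(1)] by (rule aux)
qed

context msetup begin

lemma QB:
  fixes \<Phi> \<Psi> :: "(real^'n) \<times> ('m set \<times> (real^'n^'m)) \<Rightarrow> real^'n"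
  assumes Pm[measurable]: "\<Phi> \<in> borel_measurable (borel \<Otimes>\<^sub>M KS)" and Sm[measurable]: "\<Psi> \<in> borel_measurable (borel \<Otimes>\<^sub>M KS)"
    and pe: "\<And>\<omega>. \<omega> \<in> space M \<Longrightarrow> \<phi> \<omega> = \<Phi> (x \<omega>, Kf \<omega>)"
    and se: "\<And>\<omega>. \<omega> \<in> space M \<Longrightarrow> \<psi> \<omega> = \<Psi> (x \<omega>, Kf \<omega>)"
    and pm[measurable]: "\<phi> \<in> borel_measurable M" and sm[measurable]: "\<psi> \<in> borel_measurable M"
    and pi: "integrable M (\<lambda>\<omega>. (norm (A \<omega> *v \<phi> \<omega>))\<^sup>2)" and si: "integrable M (\<lambda>\<omega>. (norm (A \<omega> *v \<psi> \<omega>))\<^sup>2)"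
  shows "integrable M (\<lambda>\<omega>. \<phi> \<omega> \<bullet> (Qm \<omega> *v \<psi> \<omega>))"
    and "(\<integral>\<omega>. (A \<omega> *v \<phi> \<omega>) \<bullet> (A \<omega> *v \<psi> \<omega>) \<partial>M) = (\<integral>\<omega>. \<phi> \<omega> \<bullet> (Qm \<omega> *v \<psi> \<omega>) \<partial>M)"
proof -
  have s_int: "integrable M (\<lambda>\<omega>. (norm (A \<omega> *v (\<phi> \<omega> + \<psi> \<omega>)))\<^sup>2)"
  proof (rule Bochner_Integration.integrable_bound[where f="\<lambda>\<omega>. 2 * (norm (A \<omega> *v \<phi> \<omega>))\<^sup>2 + 2 * (norm (A \<omega> *v \<psi> \<omega>))\<^sup>2"])
    show "integrable M (\<lambda>\<omega>. 2 * (norm (A \<omega> *v \<phi> \<omega>))\<^sup>2 + 2 * (norm (A \<omega> *v \<psi> \<omega>))\<^sup>2)" using pi si by simp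
    show "AE \<omega> in M. norm ((norm (A \<omega> *v (\<phi> \<omega> + \<psi> \<omega>)))\<^sup>2) \<le> norm (2 * (norm (A \<omega> *v \<phi> \<omega>))\<^sup>2 + 2 * (norm (A \<omega> *v \<psi> \<omega>))\<^sup>2)"
      using sq_add_le by (auto intro!: AE_I2 simp: matrix_vector_right_distrib)
  qed measurable
  have d_int: "integrable M (\<lambda>\<omega>. (norm (A \<omega> *v (\<phi> \<omega> - \<psi> \<omega>)))\<^sup>2)"
  proof (rule Bochner_Integration.integrable_bound[where f="\<lambda>\<omega>. 2 * (norm (A \<omega> *v \<phi> \<omega>))\<^sup>2 + 2 * (norm (A \<omega> *v \<psi> \<omega>))\<^sup>2"])
    show "integrable M (\<lambda>\<omega>. 2 * (norm (A \<omega> *v \<phi> \<omega>))\<^sup>2 + 2 * (norm (A \<omega> *v \<psi> \<omega>))\<^sup>2)" using pi si by simp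
    show "AE \<omega> in M. norm ((norm (A \<omega> *v (\<phi> \<omega> - \<psi> \<omega>)))\<^sup>2) \<le> norm (2 * (norm (A \<omega> *v \<phi> \<omega>))\<^sup>2 + 2 * (norm (A \<omega> *v \<psi> \<omega>))\<^sup>2)"
      using sq_diff_le by (auto intro!: AE_I2 simp: matrix_vector_mult_diff_distrib)
  qed measurable
  have Spm: "(\<lambda>p. \<Phi> p + \<Psi> p) \<in> borel_measurable (borel \<Otimes>\<^sub>M KS)" by measurable
  have Dm: "(\<lambda>p. \<Phi> p - \<Psi> p) \<in> borel_measurable (borel \<Otimes>\<^sub>M KS)" by measurable
  note qs = QI'[OF Spm, of "\<lambda>\<omega>. \<phi> \<omega> + \<psi> \<omega>"]
  note qd = QI'[OF Dm, of "\<lambda>\<omega>. \<phi> \<omega> - \<psi> \<omega>"]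
  have qs1: "integrable M (\<lambda>\<omega>. (\<phi> \<omega> + \<psi> \<omega>) \<bullet> (Qm \<omega> *v (\<phi> \<omega> + \<psi> \<omega>)))" using qs(1) pe se s_int by simp
  have qs2: "(\<integral>\<omega>. (norm (A \<omega> *v (\<phi> \<omega> + \<psi> \<omega>)))\<^sup>2 \<partial>M) = (\<integral>\<omega>. (\<phi> \<omega> + \<psi> \<omega>) \<bullet> (Qm \<omega> *v (\<phi> \<omega> + \<psi> \<omega>)) \<partial>M)"
    using qs(2) pe se s_int by simp
  have qd1: "integrable M (\<lambda>\<omega>. (\<phi> \<omega> - \<psi> \<omega>) \<bullet> (Qm \<omega> *v (\<phi> \<omega> - \<psi> \<omega>)))" using qd(1) pe se d_int by simp
  have qd2: "(\<integral>\<omega>. (norm (A \<omega> *v (\<phi> \<omega> - \<psi> \<omega>)))\<^sup>2 \<partial>M) = (\<integral>\<omega>. (\<phi> \<omega> - \<psi> \<omega>) \<bullet> (Qm \<omega> *v (\<phi> \<omega> - \<psi> \<omega>)) \<partial>M)"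
    using qd(2) pe se d_int by simp
  have eQ: "\<phi> \<omega> \<bullet> (Qm \<omega> *v \<psi> \<omega>) = ((\<phi> \<omega> + \<psi> \<omega>) \<bullet> (Qm \<omega> *v (\<phi> \<omega> + \<psi> \<omega>)) - (\<phi> \<omega> - \<psi> \<omega>) \<bullet> (Qm \<omega> *v (\<phi> \<omega> - \<psi> \<omega>))) / 4" for \<omega>
    unfolding qf_add[OF Qm_transpose] qf_diff[OF Qm_transpose] by simp
  have eA: "(A \<omega> *v \<phi> \<omega>) \<bullet> (A \<omega> *v \<psi> \<omega>) = ((norm (A \<omega> *v (\<phi> \<omega> + \<psi> \<omega>)))\<^sup>2 - (norm (A \<omega> *v (\<phi> \<omega> - \<psi> \<omega>)))\<^sup>2) / 4" for \<omega>
    unfolding matrix_vector_right_distrib matrix_vector_mult_diff_distrib polar by simp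
  show "integrable M (\<lambda>\<omega>. \<phi> \<omega> \<bullet> (Qm \<omega> *v \<psi> \<omega>))"
    unfolding eQ using qs1 qd1 by simp
  show "(\<integral>\<omega>. (A \<omega> *v \<phi> \<omega>) \<bullet> (A \<omega> *v \<psi> \<omega>) \<partial>M) = (\<integral>\<omega>. \<phi> \<omega> \<bullet> (Qm \<omega> *v \<psi> \<omega>) \<partial>M)"
    unfolding eQ eA using qs1 qd1 s_int d_int qs2 qd2 by simp
qed

lemma cross0:
  fixes U :: "(real^'n) \<times> ('m set \<times> (real^'n^'m)) \<Rightarrow> real^'n"
  assumes Um[measurable]: "U \<in> borel_measurable (borel \<Otimes>\<^sub>M KS)" and ue: "\<And>\<omega>. \<omega> \<in> space M \<Longrightarrow> u \<omega> = U (x \<omega>, Kf \<omega>)"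
    and uO: "u \<in> borel_measurable Ob"
    and ui: "integrable M (\<lambda>\<omega>. u \<omega> \<bullet> (Qm \<omega> *v u \<omega>))"
    and ei: "integrable M (\<lambda>\<omega>. (xh \<omega> - x \<omega>) \<bullet> (Qm \<omega> *v (xh \<omega> - x \<omega>)))"
  shows "integrable M (\<lambda>\<omega>. u \<omega> \<bullet> (Qm \<omega> *v (xh \<omega> - x \<omega>)))"
    and "(\<integral>\<omega>. u \<omega> \<bullet> (Qm \<omega> *v (xh \<omega> - x \<omega>)) \<partial>M) = 0"
proof -
  interpret Ob: sigma_finite_subalgebra M Ob by (rule O_sub)
  have um[measurable]: "u \<in> borel_measurable M" using measurable_from_subalg[OF Ob.subalg uO] .
  have Qm_O[measurable]: "Qm \<in> borel_measurable Ob" by (rule Qm_measO)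
  have uO'[measurable]: "u \<in> borel_measurable Ob" by (rule uO)
  define w where "w \<omega> = Qm \<omega> *v u \<omega>" for \<omega>
  have wO[measurable]: "w \<in> borel_measurable Ob" unfolding w_def by measurable
  have wM[measurable]: "w \<in> borel_measurable M" unfolding w_def by measurable
  define T where "T c \<omega> = (if norm (w \<omega>) \<le> real c then 1 else 0 :: real)" for c :: nat and \<omega>
  have TO[measurable]: "T c \<in> borel_measurable Ob" for c unfolding T_def by measurable
  have TM[measurable]: "T c \<in> borel_measurable M" for c unfolding T_def by measurable
  define g where "g c j \<omega> = T c \<omega> * w \<omega> $ j" for c j \<omega>
  have gO[measurable]: "g c j \<in> borel_measurable Ob" for c j unfolding g_def by measurable
  have gM[measurable]: "g c j \<in> borel_measurable M" for c j unfolding g_def by measurable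
  have gb: "\<bar>g c j \<omega>\<bar> \<le> real c" for c j \<omega>
    using abs_nth_le[of "w \<omega>" j] by (auto simp: g_def T_def)
  have gx: "integrable M (\<lambda>\<omega>. g c j \<omega> * x \<omega> $ j)" for c j
    by (rule int_bounded_mult[OF x_comp_int _ gb]) measurable
  have gxh: "integrable M (\<lambda>\<omega>. g c j \<omega> * xh \<omega> $ j)" for c j
    using Ob.real_cond_exp_intg(1)[OF gx gO] by (simp add: xh_comp)
  have geq: "(\<integral>\<omega>. g c j \<omega> * xh \<omega> $ j \<partial>M) = (\<integral>\<omega>. g c j \<omega> * x \<omega> $ j \<partial>M)" for c j
    using Ob.real_cond_exp_intg(2)[OF gx gO] by (simp add: xh_comp)
  define s where "s c \<omega> = T c \<omega> * (u \<omega> \<bullet> (Qm \<omega> *v (xh \<omega> - x \<omega>)))" for c \<omega>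
  have s_sum: "s c \<omega> = (\<Sum>j\<in>UNIV. g c j \<omega> * xh \<omega> $ j - g c j \<omega> * x \<omega> $ j)" for c \<omega>
    by (simp add: s_def g_def w_def qf_as_sum[OF Qm_transpose] sum_distrib_left algebra_simps sum_subtractf)
  have s0: "integral\<^sup>L M (s c) = 0" for c
  proof -
    have "integral\<^sup>L M (s c) = (\<Sum>j\<in>UNIV. (\<integral>\<omega>. g c j \<omega> * xh \<omega> $ j - g c j \<omega> * x \<omega> $ j \<partial>M))"
      unfolding s_sum by (rule Bochner_Integration.integral_sum) (use gx gxh in simp)
    also have "\<dots> = 0" by (simp add: gx gxh geq)
    finally show ?thesis .
  qed
  define \<Phi>e where "\<Phi>e = (\<lambda>p. Xh p - fst p)"
  have \<Phi>em[measurable]: "\<Phi>e \<in> borel_measurable (borel \<Otimes>\<^sub>M KS)" unfolding \<Phi>e_def by measurable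
  have e_eq: "\<And>\<omega>. \<omega> \<in> space M \<Longrightarrow> xh \<omega> - x \<omega> = \<Phi>e (x \<omega>, Kf \<omega>)" by (simp add: \<Phi>e_def xh_Xh)
  define B where "B \<omega> = (u \<omega> \<bullet> (Qm \<omega> *v u \<omega>) + (xh \<omega> - x \<omega>) \<bullet> (Qm \<omega> *v (xh \<omega> - x \<omega>))) / 2" for \<omega>
  have Bi: "integrable M B" unfolding B_def using ui ei by simp
  have p1: "AE \<omega> in M. (u \<omega> + (xh \<omega> - x \<omega>)) \<bullet> (Qm \<omega> *v (u \<omega> + (xh \<omega> - x \<omega>))) \<ge> 0"
    by (rule PSD'[where \<Phi>="\<lambda>p. U p + \<Phi>e p"]) (auto simp: ue e_eq)
  have p2: "AE \<omega> in M. (u \<omega> - (xh \<omega> - x \<omega>)) \<bullet> (Qm \<omega> *v (u \<omega> - (xh \<omega> - x \<omega>))) \<ge> 0"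
    by (rule PSD'[where \<Phi>="\<lambda>p. U p - \<Phi>e p"]) (auto simp: ue e_eq)
  have bnd: "AE \<omega> in M. \<bar>u \<omega> \<bullet> (Qm \<omega> *v (xh \<omega> - x \<omega>))\<bar> \<le> B \<omega>"
    using p1 p2
  proof eventually_elim
    case (elim \<omega>)
    then show ?case
      unfolding B_def by (rule qf_cs[OF Qm_transpose])
  qed
  have lim: "AE \<omega> in M. (\<lambda>c. s c \<omega>) \<longlonglongrightarrow> u \<omega> \<bullet> (Qm \<omega> *v (xh \<omega> - x \<omega>))"
  proof (intro AE_I2 tendsto_eventually)
    fix \<omega>
    show "\<forall>\<^sub>F c in sequentially. s c \<omega> = u \<omega> \<bullet> (Qm \<omega> *v (xh \<omega> - x \<omega>))"
      unfolding eventually_sequentially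
    proof (intro exI allI impI)
      fix c assume "nat \<lceil>norm (w \<omega>)\<rceil> \<le> c"
      then have "norm (w \<omega>) \<le> real c" using real_nat_ceiling_ge[of "norm (w \<omega>)"] by linarith
      then show "s c \<omega> = u \<omega> \<bullet> (Qm \<omega> *v (xh \<omega> - x \<omega>))" by (simp add: s_def T_def)
    qed
  qed
  have sb: "AE \<omega> in M. norm (s c \<omega>) \<le> B \<omega>" for c
    using bnd by eventually_elim (auto simp: s_def T_def intro: order_trans)
  have fm: "(\<lambda>\<omega>. u \<omega> \<bullet> (Qm \<omega> *v (xh \<omega> - x \<omega>))) \<in> borel_measurable M" by measurable
  have sm: "s c \<in> borel_measurable M" for c unfolding s_def by measurable
  show "integrable M (\<lambda>\<omega>. u \<omega> \<bullet> (Qm \<omega> *v (xh \<omega> - x \<omega>)))"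
    by (rule integrable_dominated_convergence[OF fm sm Bi lim sb])
  have "(\<lambda>c. integral\<^sup>L M (s c)) \<longlonglongrightarrow> (\<integral>\<omega>. u \<omega> \<bullet> (Qm \<omega> *v (xh \<omega> - x \<omega>)) \<partial>M)"
    by (rule integral_dominated_convergence[OF fm sm Bi lim sb])
  then have "(\<lambda>c. 0) \<longlonglongrightarrow> (\<integral>\<omega>. u \<omega> \<bullet> (Qm \<omega> *v (xh \<omega> - x \<omega>)) \<partial>M)" by (simp add: s0)
  then show "(\<integral>\<omega>. u \<omega> \<bullet> (Qm \<omega> *v (xh \<omega> - x \<omega>)) \<partial>M) = 0"
    using LIMSEQ_unique tendsto_const by blast
qed

end


lemma small_zero:
  fixes n c :: real
  assumes h: "\<And>k::nat. 2 * n \<le> c / (real k + 1)" and n0: "0 \<le> n"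
  shows "n = 0"
proof (rule ccontr)
  assume "n \<noteq> 0"
  then have np: "n > 0" using n0 by simp
  obtain k :: nat where k: "c / (2 * n) < real k" using reals_Archimedean2 by blast
  then have "c < 2 * n * real k" using np by (simp add: divide_less_eq mult.commute)
  then have "c < 2 * n * (real k + 1)" using np by (simp add: algebra_simps)
  then have "c / (real k + 1) < 2 * n" by (simp add: divide_less_eq mult.commute)
  then show False using h[of k] by simp
qed

context msetup begin

lemma Qu_zero:
  fixes U :: "(real^'n) \<times> ('m set \<times> (real^'n^'m)) \<Rightarrow> real^'n"
  assumes Um[measurable]: "U \<in> borel_measurable (borel \<Otimes>\<^sub>M KS)" and ue: "\<And>\<omega>. \<omega> \<in> space M \<Longrightarrow> u \<omega> = U (x \<omega>, Kf \<omega>)"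
    and z: "AE \<omega> in M. u \<omega> \<bullet> (Qm \<omega> *v u \<omega>) = 0"
  shows "AE \<omega> in M. Qm \<omega> *v u \<omega> = 0"
proof -
  obtain q where qm[measurable]: "q \<in> borel_measurable KS" and q: "\<And>\<omega>. \<omega> \<in> space M \<Longrightarrow> Qm \<omega> = q (Kf \<omega>)"
    using Qm_DD by auto
  have k: "AE \<omega> in M. (u \<omega> - (1 / (real k + 1)) *\<^sub>R (Qm \<omega> *v u \<omega>)) \<bullet> (Qm \<omega> *v (u \<omega> - (1 / (real k + 1)) *\<^sub>R (Qm \<omega> *v u \<omega>))) \<ge> 0" for k :: nat
    by (rule PSD'[where \<Phi>="\<lambda>p. U p - (1 / (real k + 1)) *\<^sub>R (q (snd p) *v U p)"]) (auto simp: ue q)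
  have "AE \<omega> in M. \<forall>k::nat. (u \<omega> - (1 / (real k + 1)) *\<^sub>R (Qm \<omega> *v u \<omega>)) \<bullet> (Qm \<omega> *v (u \<omega> - (1 / (real k + 1)) *\<^sub>R (Qm \<omega> *v u \<omega>))) \<ge> 0"
    by (subst AE_all_countable) (use k in blast)
  with z show ?thesis
  proof eventually_elim
    case (elim \<omega>)
    define w where "w = Qm \<omega> *v u \<omega>"
    define c where "c = w \<bullet> (Qm \<omega> *v w)"
    have uw: "u \<omega> \<bullet> (Qm \<omega> *v w) = w \<bullet> w"
    proof -
      have "u \<omega> \<bullet> (Qm \<omega> *v w) = (transpose (Qm \<omega>) *v u \<omega>) \<bullet> w" by (rule inner_mv_transpose)
      also have "transpose (Qm \<omega>) = Qm \<omega>" by (rule Qm_transpose)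
      finally show ?thesis by (simp add: w_def)
    qed
    have "2 * (w \<bullet> w) \<le> c / (real k + 1)" for k :: nat
    proof -
      define t where "t = 1 / (real k + 1)"
      have tp: "t > 0" by (simp add: t_def)
      have "0 \<le> (u \<omega> - t *\<^sub>R w) \<bullet> (Qm \<omega> *v (u \<omega> - t *\<^sub>R w))"
        using elim(2) by (simp add: t_def w_def)
      also have "\<dots> = u \<omega> \<bullet> (Qm \<omega> *v u \<omega>) - 2 * (u \<omega> \<bullet> (Qm \<omega> *v (t *\<^sub>R w))) + (t *\<^sub>R w) \<bullet> (Qm \<omega> *v (t *\<^sub>R w))"
        by (rule qf_diff[OF Qm_transpose])
      also have "\<dots> = - 2 * t * (w \<bullet> w) + t * t * c"
        using elim(1) uw by (simp add: c_def matrix_vector_mult_scaleR algebra_simps)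
      finally have "2 * t * (w \<bullet> w) \<le> t * (t * c)" by (simp add: algebra_simps)
      then have "2 * (w \<bullet> w) \<le> t * c" using tp by (simp add: mult.assoc)
      then show ?thesis by (simp add: t_def)
    qed
    then have "w \<bullet> w = 0" by (rule small_zero) simp
    then show ?case by (simp add: w_def)
  qed
qed

lemma decomp:
  assumes adm: "admissible M x A S f"
  shows "integrable M (\<lambda>\<omega>. (f (obs x A S \<omega>) - xh \<omega>) \<bullet> (Qm \<omega> *v (f (obs x A S \<omega>) - xh \<omega>)))"
    and "AE \<omega> in M. (f (obs x A S \<omega>) - xh \<omega>) \<bullet> (Qm \<omega> *v (f (obs x A S \<omega>) - xh \<omega>)) \<ge> 0"
    and "integrable M (\<lambda>\<omega>. (norm (A \<omega> *v f (obs x A S \<omega>) - A \<omega> *v x \<omega>))\<^sup>2)"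
    and "(\<integral>\<omega>. (norm (A \<omega> *v f (obs x A S \<omega>) - A \<omega> *v x \<omega>))\<^sup>2 \<partial>M)
       = (\<integral>\<omega>. (f (obs x A S \<omega>) - xh \<omega>) \<bullet> (Qm \<omega> *v (f (obs x A S \<omega>) - xh \<omega>)) \<partial>M)
         + (\<integral>\<omega>. (norm (A \<omega> *v (xh \<omega> - x \<omega>)))\<^sup>2 \<partial>M)"
proof -
  have fm[measurable]: "f \<in> borel_measurable obs_space" using adm by (simp add: admissible_def)
  have iF0: "integrable M (\<lambda>\<omega>. (norm (A \<omega> *v f (obs x A S \<omega>) - A \<omega> *v x \<omega>))\<^sup>2)"
    using adm by (simp add: admissible_def)
  then show "integrable M (\<lambda>\<omega>. (norm (A \<omega> *v f (obs x A S \<omega>) - A \<omega> *v x \<omega>))\<^sup>2)" .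
  define u where "u \<omega> = f (obs x A S \<omega>) - xh \<omega>" for \<omega>
  define e where "e \<omega> = xh \<omega> - x \<omega>" for \<omega>
  define U where "U p = f (ob p) - Xh p" for p
  have Um[measurable]: "U \<in> borel_measurable (borel \<Otimes>\<^sub>M KS)" unfolding U_def by measurable
  have ue: "\<And>\<omega>. \<omega> \<in> space M \<Longrightarrow> u \<omega> = U (x \<omega>, Kf \<omega>)" by (simp add: u_def U_def obs_ob xh_Xh)
  define \<Phi>e where "\<Phi>e = (\<lambda>p. Xh p - fst p)"
  have \<Phi>em[measurable]: "\<Phi>e \<in> borel_measurable (borel \<Otimes>\<^sub>M KS)" unfolding \<Phi>e_def by measurable
  have ee: "\<And>\<omega>. \<omega> \<in> space M \<Longrightarrow> e \<omega> = \<Phi>e (x \<omega>, Kf \<omega>)" by (simp add: \<Phi>e_def e_def xh_Xh)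
  have uO: "u \<in> borel_measurable Ob"
  proof -
    have "(\<lambda>\<omega>. f (obs x A S \<omega>)) \<in> borel_measurable Ob" by (rule O_meas_comp) measurable
    moreover have "xh \<in> borel_measurable Ob" by (rule xh_measO)
    ultimately show ?thesis unfolding u_def by measurable
  qed
  have um[measurable]: "u \<in> borel_measurable M" unfolding u_def by measurable
  have em[measurable]: "e \<in> borel_measurable M" unfolding e_def by measurable
  have iF: "integrable M (\<lambda>\<omega>. (norm (A \<omega> *v (u \<omega> + e \<omega>)))\<^sup>2)"
    using iF0 by (simp add: u_def e_def matrix_vector_mult_diff_distrib)
  have ie: "integrable M (\<lambda>\<omega>. (norm (A \<omega> *v e \<omega>))\<^sup>2)" using e_int by (simp add: e_def)
  have iu: "integrable M (\<lambda>\<omega>. (norm (A \<omega> *v u \<omega>))\<^sup>2)"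
  proof (rule Bochner_Integration.integrable_bound[where f="\<lambda>\<omega>. 2 * (norm (A \<omega> *v (u \<omega> + e \<omega>)))\<^sup>2 + 2 * (norm (A \<omega> *v e \<omega>))\<^sup>2"])
    show "integrable M (\<lambda>\<omega>. 2 * (norm (A \<omega> *v (u \<omega> + e \<omega>)))\<^sup>2 + 2 * (norm (A \<omega> *v e \<omega>))\<^sup>2)"
      using iF ie by simp
    show "AE \<omega> in M. norm ((norm (A \<omega> *v u \<omega>))\<^sup>2) \<le> norm (2 * (norm (A \<omega> *v (u \<omega> + e \<omega>)))\<^sup>2 + 2 * (norm (A \<omega> *v e \<omega>))\<^sup>2)"
    proof (intro AE_I2)
      fix \<omega>
      have "A \<omega> *v u \<omega> = A \<omega> *v (u \<omega> + e \<omega>) - A \<omega> *v e \<omega>" by (simp add: matrix_vector_mult_diff_distrib[symmetric])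
      then show "norm ((norm (A \<omega> *v u \<omega>))\<^sup>2) \<le> norm (2 * (norm (A \<omega> *v (u \<omega> + e \<omega>)))\<^sup>2 + 2 * (norm (A \<omega> *v e \<omega>))\<^sup>2)"
        using sq_diff_le[of "A \<omega> *v (u \<omega> + e \<omega>)" "A \<omega> *v e \<omega>"] by simp
    qed
  qed measurable
  note qu = QI'[OF Um ue iu]
  note qe = QI'[OF \<Phi>em ee ie]
  show "integrable M (\<lambda>\<omega>. (f (obs x A S \<omega>) - xh \<omega>) \<bullet> (Qm \<omega> *v (f (obs x A S \<omega>) - xh \<omega>)))"
    using qu(1) by (simp add: u_def)
  show "AE \<omega> in M. (f (obs x A S \<omega>) - xh \<omega>) \<bullet> (Qm \<omega> *v (f (obs x A S \<omega>) - xh \<omega>)) \<ge> 0"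
    using PSD'[OF Um ue] by (simp add: u_def)
  note qb = QB[OF Um \<Phi>em ue ee um em iu ie]
  have c0: "(\<integral>\<omega>. u \<omega> \<bullet> (Qm \<omega> *v (xh \<omega> - x \<omega>)) \<partial>M) = 0"
  proof (rule cross0(2)[OF Um ue uO qu(1)])
    have "(\<lambda>\<omega>. e \<omega> \<bullet> (Qm \<omega> *v e \<omega>)) = (\<lambda>\<omega>. (xh \<omega> - x \<omega>) \<bullet> (Qm \<omega> *v (xh \<omega> - x \<omega>)))"
      by (simp add: e_def fun_eq_iff)
    then show "integrable M (\<lambda>\<omega>. (xh \<omega> - x \<omega>) \<bullet> (Qm \<omega> *v (xh \<omega> - x \<omega>)))" using qe(1) by simp
  qed
  have cross: "(\<integral>\<omega>. (A \<omega> *v u \<omega>) \<bullet> (A \<omega> *v e \<omega>) \<partial>M) = 0"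
    using qb(2) c0 by (simp add: e_def)
  have pw: "(norm (A \<omega> *v (u \<omega> + e \<omega>)))\<^sup>2 = (norm (A \<omega> *v u \<omega>))\<^sup>2 + 2 * ((A \<omega> *v u \<omega>) \<bullet> (A \<omega> *v e \<omega>)) + (norm (A \<omega> *v e \<omega>))\<^sup>2" for \<omega>
    by (simp add: matrix_vector_right_distrib sq_sum3)
  have icr: "integrable M (\<lambda>\<omega>. (A \<omega> *v u \<omega>) \<bullet> (A \<omega> *v e \<omega>))"
  proof -
    have "(\<lambda>\<omega>. (A \<omega> *v u \<omega>) \<bullet> (A \<omega> *v e \<omega>)) = (\<lambda>\<omega>. ((norm (A \<omega> *v (u \<omega> + e \<omega>)))\<^sup>2 - (norm (A \<omega> *v u \<omega>))\<^sup>2 - (norm (A \<omega> *v e \<omega>))\<^sup>2) / 2)"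
      by (simp add: fun_eq_iff pw)
    then show ?thesis using iF iu ie by simp
  qed
  have "(\<integral>\<omega>. (norm (A \<omega> *v f (obs x A S \<omega>) - A \<omega> *v x \<omega>))\<^sup>2 \<partial>M) = (\<integral>\<omega>. (norm (A \<omega> *v (u \<omega> + e \<omega>)))\<^sup>2 \<partial>M)"
    by (simp add: u_def e_def matrix_vector_mult_diff_distrib)
  also have "\<dots> = (\<integral>\<omega>. (norm (A \<omega> *v u \<omega>))\<^sup>2 \<partial>M) + 2 * (\<integral>\<omega>. (A \<omega> *v u \<omega>) \<bullet> (A \<omega> *v e \<omega>) \<partial>M) + (\<integral>\<omega>. (norm (A \<omega> *v e \<omega>))\<^sup>2 \<partial>M)"
    unfolding pw using iu icr ie by simp
  also have "\<dots> = (\<integral>\<omega>. u \<omega> \<bullet> (Qm \<omega> *v u \<omega>) \<partial>M) + (\<integral>\<omega>. (norm (A \<omega> *v e \<omega>))\<^sup>2 \<partial>M)"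
    using cross qu(2) by simp
  finally show "(\<integral>\<omega>. (norm (A \<omega> *v f (obs x A S \<omega>) - A \<omega> *v x \<omega>))\<^sup>2 \<partial>M)
       = (\<integral>\<omega>. (f (obs x A S \<omega>) - xh \<omega>) \<bullet> (Qm \<omega> *v (f (obs x A S \<omega>) - xh \<omega>)) \<partial>M)
         + (\<integral>\<omega>. (norm (A \<omega> *v (xh \<omega> - x \<omega>)))\<^sup>2 \<partial>M)"
    by (simp add: u_def e_def)
qed

end


lemma pinv_a:
  fixes Q :: "real^'n^'n"
  assumes "transpose Q = Q" "Q *v (F - y) = 0"
  shows "F = (mp_pinv Q ** Q) *v y + (mat 1 - mp_pinv Q ** Q) *v F"
proof -
  have "(mp_pinv Q ** Q) *v (F - y) = mp_pinv Q *v (Q *v (F - y))" by (simp add: matrix_vector_mul_assoc)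
  also have "\<dots> = 0" using assms(2) by simp
  finally have "(mp_pinv Q ** Q) *v F = (mp_pinv Q ** Q) *v y" by (simp add: matrix_vector_mult_diff_distrib)
  then show ?thesis by (simp add: matrix_vector_mult_diff_rdistrib)
qed

lemma pinv_b:
  fixes Q :: "real^'n^'n"
  assumes "transpose Q = Q" "F = (mp_pinv Q ** Q) *v y + (mat 1 - mp_pinv Q ** Q) *v v"
  shows "Q *v (F - y) = 0"
proof -
  have QP: "Q ** (mp_pinv Q ** Q) = Q" using mp_pinv_QPQ[OF assms(1)] by (simp add: matrix_mul_assoc)
  have "Q *v F = (Q ** (mp_pinv Q ** Q)) *v y + (Q *v v - (Q ** (mp_pinv Q ** Q)) *v v)"
    by (simp add: assms(2) matrix_vector_right_distrib matrix_vector_mult_diff_rdistrib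
        matrix_vector_mult_diff_distrib matrix_vector_mul_assoc)
  then have "Q *v F = Q *v y" by (simp add: QP)
  then show ?thesis by (simp add: matrix_vector_mult_diff_distrib)
qed

lemma pinv_c:
  fixes Q :: "real^'n^'n"
  assumes "transpose Q = Q" "invertible Q"
  shows "(mp_pinv Q ** Q) *v y + (mat 1 - mp_pinv Q ** Q) *v v = y"
  using mp_pinv_inv[OF assms] by simp

context msetup begin

lemma FyA_sub: "sigma_finite_subalgebra M (F_yA M x A)"
proof -
  have "(\<lambda>\<omega>. (A \<omega> *v x \<omega>, A \<omega>)) \<in> measurable M borel"
    by (simp add: borel_prod[symmetric])
  then show ?thesis unfolding F_yA_def gen_sigma_def by (rule sfs_vimage)
qed

lemma loss_eq:
  assumes adm: "admissible M x A S f"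
  shows "exp_msplit_loss M x A S f = (1 / real CARD('m)) * (\<integral>\<omega>. (norm (A \<omega> *v f (obs x A S \<omega>) - A \<omega> *v x \<omega>))\<^sup>2 \<partial>M)"
proof -
  interpret Y: sigma_finite_subalgebra M "F_yA M x A" by (rule FyA_sub)
  have i: "integrable M (\<lambda>\<omega>. (1 / real CARD('m)) * (norm (A \<omega> *v f (obs x A S \<omega>) - A \<omega> *v x \<omega>))\<^sup>2)"
    using adm by (simp add: admissible_def)
  have "exp_msplit_loss M x A S f = (\<integral>\<omega>. (1 / real CARD('m)) * (norm (A \<omega> *v f (obs x A S \<omega>) - A \<omega> *v x \<omega>))\<^sup>2 \<partial>M)"
    unfolding exp_msplit_loss_def msplit_loss_def by (rule Y.real_cond_exp_int(2)[OF i])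
  then show ?thesis by simp
qed

definition "C0 = (\<integral>\<omega>. (norm (A \<omega> *v (xh \<omega> - x \<omega>)))\<^sup>2 \<partial>M)"

lemma loss_decomp:
  assumes adm: "admissible M x A S f"
  shows "exp_msplit_loss M x A S f = (1 / real CARD('m)) *
     ((\<integral>\<omega>. (f (obs x A S \<omega>) - xh \<omega>) \<bullet> (Qm \<omega> *v (f (obs x A S \<omega>) - xh \<omega>)) \<partial>M) + C0)"
  using loss_eq[OF adm] decomp(4)[OF adm] by (simp add: C0_def)

lemma I_nonneg:
  assumes adm: "admissible M x A S f"
  shows "0 \<le> (\<integral>\<omega>. (f (obs x A S \<omega>) - xh \<omega>) \<bullet> (Qm \<omega> *v (f (obs x A S \<omega>) - xh \<omega>)) \<partial>M)"
  by (rule integral_nonneg_AE[OF decomp(2)[OF adm]])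

lemma hX_adm: "admissible M x A S hX"
  unfolding admissible_def
proof (intro conjI)
  show "hX \<in> borel_measurable obs_space" by (rule hX(1))
  show "integrable M (\<lambda>\<omega>. (norm (hX (obs x A S \<omega>)))\<^sup>2)"
    using xh_sq_int by (rule Bochner_Integration.integrable_cong[THEN iffD1, rotated 2]) (auto simp: hX(2))
  show "integrable M (\<lambda>\<omega>. (norm (A \<omega> *v hX (obs x A S \<omega>) - A \<omega> *v x \<omega>))\<^sup>2)"
    using e_int by (rule Bochner_Integration.integrable_cong[THEN iffD1, rotated 2])
       (auto simp: hX(2) matrix_vector_mult_diff_distrib)
qed

lemma hX_loss: "exp_msplit_loss M x A S hX = (1 / real CARD('m)) * C0"
proof -
  have "(\<integral>\<omega>. (hX (obs x A S \<omega>) - xh \<omega>) \<bullet> (Qm \<omega> *v (hX (obs x A S \<omega>) - xh \<omega>)) \<partial>M) = (\<integral>\<omega>. 0 \<partial>M)"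
    by (rule Bochner_Integration.integral_cong) (auto simp: hX(2))
  then show ?thesis using loss_decomp[OF hX_adm] by simp
qed

lemma min_iff_I:
  assumes adm: "admissible M x A S f"
  shows "is_global_minimizer M x A S f \<longleftrightarrow>
     (\<integral>\<omega>. (f (obs x A S \<omega>) - xh \<omega>) \<bullet> (Qm \<omega> *v (f (obs x A S \<omega>) - xh \<omega>)) \<partial>M) = 0"
proof
  let ?I = "\<lambda>f. (\<integral>\<omega>. (f (obs x A S \<omega>) - xh \<omega>) \<bullet> (Qm \<omega> *v (f (obs x A S \<omega>) - xh \<omega>)) \<partial>M)"
  have m0: "0 < 1 / real CARD('m)" by simp
  assume "is_global_minimizer M x A S f"
  then have "exp_msplit_loss M x A S f \<le> exp_msplit_loss M x A S hX"
    using hX_adm unfolding is_global_minimizer_def by blast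
  then have "(1 / real CARD('m)) * (?I f + C0) \<le> (1 / real CARD('m)) * C0"
    by (simp add: loss_decomp[OF adm] hX_loss)
  then have "?I f + C0 \<le> C0" using m0 by (simp only: mult_le_cancel_left_pos)
  then show "?I f = 0" using I_nonneg[OF adm] by simp
next
  let ?I = "\<lambda>f. (\<integral>\<omega>. (f (obs x A S \<omega>) - xh \<omega>) \<bullet> (Qm \<omega> *v (f (obs x A S \<omega>) - xh \<omega>)) \<partial>M)"
  assume I0: "?I f = 0"
  show "is_global_minimizer M x A S f"
    unfolding is_global_minimizer_def
  proof (intro conjI allI impI adm)
    fix g assume g: "admissible M x A S g"
    have "(1 / real CARD('m)) * (?I f + C0) \<le> (1 / real CARD('m)) * (?I g + C0)"
      using I0 I_nonneg[OF g] by (intro mult_left_mono) auto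
    then show "exp_msplit_loss M x A S f \<le> exp_msplit_loss M x A S g"
      by (simp add: loss_decomp[OF adm] loss_decomp[OF g])
  qed
qed

lemma min_char:
  assumes adm: "admissible M x A S f"
  shows "is_global_minimizer M x A S f \<longleftrightarrow>
    (\<exists>v :: 'm set \<times> ((real^'m) \<times> (real^'n^'m)) \<Rightarrow> real^'n. AE \<omega> in M.
       f (obs x A S \<omega>) = (mp_pinv (Qm \<omega>) ** Qm \<omega>) *v xh \<omega> + (mat 1 - mp_pinv (Qm \<omega>) ** Qm \<omega>) *v v (obs x A S \<omega>))"
proof -
  have fm[measurable]: "f \<in> borel_measurable obs_space" using adm by (simp add: admissible_def)
  define U where "U p = f (ob p) - Xh p" for p
  have Um[measurable]: "U \<in> borel_measurable (borel \<Otimes>\<^sub>M KS)" unfolding U_def by measurable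
  have ue: "\<And>\<omega>. \<omega> \<in> space M \<Longrightarrow> f (obs x A S \<omega>) - xh \<omega> = U (x \<omega>, Kf \<omega>)" by (simp add: U_def obs_ob xh_Xh)
  have "is_global_minimizer M x A S f \<longleftrightarrow>
     (\<integral>\<omega>. (f (obs x A S \<omega>) - xh \<omega>) \<bullet> (Qm \<omega> *v (f (obs x A S \<omega>) - xh \<omega>)) \<partial>M) = 0"
    by (rule min_iff_I[OF adm])
  also have "\<dots> \<longleftrightarrow> (AE \<omega> in M. (f (obs x A S \<omega>) - xh \<omega>) \<bullet> (Qm \<omega> *v (f (obs x A S \<omega>) - xh \<omega>)) = 0)"
    by (rule integral_nonneg_eq_0_iff_AE[OF decomp(1)[OF adm] decomp(2)[OF adm]])
  also have "\<dots> \<longleftrightarrow> (AE \<omega> in M. Qm \<omega> *v (f (obs x A S \<omega>) - xh \<omega>) = 0)"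
  proof
    assume "AE \<omega> in M. (f (obs x A S \<omega>) - xh \<omega>) \<bullet> (Qm \<omega> *v (f (obs x A S \<omega>) - xh \<omega>)) = 0"
    then show "AE \<omega> in M. Qm \<omega> *v (f (obs x A S \<omega>) - xh \<omega>) = 0"
      using Qu_zero[where u="\<lambda>\<omega>. f (obs x A S \<omega>) - xh \<omega>", OF Um ue] by simp
  next
    assume "AE \<omega> in M. Qm \<omega> *v (f (obs x A S \<omega>) - xh \<omega>) = 0"
    then show "AE \<omega> in M. (f (obs x A S \<omega>) - xh \<omega>) \<bullet> (Qm \<omega> *v (f (obs x A S \<omega>) - xh \<omega>)) = 0"
      by eventually_elim simp
  qed
  also have "\<dots> \<longleftrightarrow> (\<exists>v :: 'm set \<times> ((real^'m) \<times> (real^'n^'m)) \<Rightarrow> real^'n. AE \<omega> in M.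
       f (obs x A S \<omega>) = (mp_pinv (Qm \<omega>) ** Qm \<omega>) *v xh \<omega> + (mat 1 - mp_pinv (Qm \<omega>) ** Qm \<omega>) *v v (obs x A S \<omega>))"
  proof
    assume "AE \<omega> in M. Qm \<omega> *v (f (obs x A S \<omega>) - xh \<omega>) = 0"
    then have "AE \<omega> in M. f (obs x A S \<omega>) = (mp_pinv (Qm \<omega>) ** Qm \<omega>) *v xh \<omega> + (mat 1 - mp_pinv (Qm \<omega>) ** Qm \<omega>) *v f (obs x A S \<omega>)"
      by eventually_elim (rule pinv_a[OF Qm_transpose])
    then show "\<exists>v :: 'm set \<times> ((real^'m) \<times> (real^'n^'m)) \<Rightarrow> real^'n. AE \<omega> in M.
       f (obs x A S \<omega>) = (mp_pinv (Qm \<omega>) ** Qm \<omega>) *v xh \<omega> + (mat 1 - mp_pinv (Qm \<omega>) ** Qm \<omega>) *v v (obs x A S \<omega>)"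
      by blast
  next
    assume "\<exists>v :: 'm set \<times> ((real^'m) \<times> (real^'n^'m)) \<Rightarrow> real^'n. AE \<omega> in M.
       f (obs x A S \<omega>) = (mp_pinv (Qm \<omega>) ** Qm \<omega>) *v xh \<omega> + (mat 1 - mp_pinv (Qm \<omega>) ** Qm \<omega>) *v v (obs x A S \<omega>)"
    then obtain v :: "'m set \<times> ((real^'m) \<times> (real^'n^'m)) \<Rightarrow> real^'n" where
      "AE \<omega> in M. f (obs x A S \<omega>) = (mp_pinv (Qm \<omega>) ** Qm \<omega>) *v xh \<omega> + (mat 1 - mp_pinv (Qm \<omega>) ** Qm \<omega>) *v v (obs x A S \<omega>)"
      by blast
    then show "AE \<omega> in M. Qm \<omega> *v (f (obs x A S \<omega>) - xh \<omega>) = 0"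
      by eventually_elim (rule pinv_b[OF Qm_transpose])
  qed
  finally show ?thesis .
qed

lemma main_loc:
  shows
    "(\<forall>f. admissible M x A S f \<longrightarrow>
        exp_msplit_loss M x A S f =
        (\<integral>\<omega>. (1 / real CARD('m)) *
             ((f (obs x A S \<omega>) - x \<omega>) \<bullet> (Qmat M A S \<omega> *v (f (obs x A S \<omega>) - x \<omega>))) \<partial>M))
   \<and> (\<forall>f. admissible M x A S f \<longrightarrow>
        (is_global_minimizer M x A S f \<longleftrightarrow>
         (\<exists>v :: 'm set \<times> ((real^'m) \<times> (real^'n^'m)) \<Rightarrow> real^'n. AE \<omega> in M.
            f (obs x A S \<omega>) =
              (mp_pinv (Qmat M A S \<omega>) ** Qmat M A S \<omega>) *v vcond_exp M (F_obs M x A S) x \<omega>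
            + (mat 1 - mp_pinv (Qmat M A S \<omega>) ** Qmat M A S \<omega>) *v v (obs x A S \<omega>))))
   \<and> ((AE \<omega> in M. invertible (Qmat M A S \<omega>)) \<longrightarrow>
        (\<forall>f. admissible M x A S f \<longrightarrow>
          (is_global_minimizer M x A S f \<longleftrightarrow>
           (AE \<omega> in M. f (obs x A S \<omega>) = vcond_exp M (F_obs M x A S) x \<omega>))))"
proof -
  have QQ: "Qmat M A S = Qm" by (simp add: Qm_def)
  have XX: "vcond_exp M (F_obs M x A S) x = xh" by (simp add: xh_def Ob_def)
  have part1: "exp_msplit_loss M x A S f =
        (\<integral>\<omega>. (1 / real CARD('m)) * ((f (obs x A S \<omega>) - x \<omega>) \<bullet> (Qm \<omega> *v (f (obs x A S \<omega>) - x \<omega>))) \<partial>M)"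
    if adm: "admissible M x A S f" for f
  proof -
    have fm[measurable]: "f \<in> borel_measurable obs_space" using adm by (simp add: admissible_def)
    define \<Phi> where "\<Phi> p = f (ob p) - fst p" for p
    have Pm[measurable]: "\<Phi> \<in> borel_measurable (borel \<Otimes>\<^sub>M KS)" unfolding \<Phi>_def by measurable
    have pe: "\<And>\<omega>. \<omega> \<in> space M \<Longrightarrow> f (obs x A S \<omega>) - x \<omega> = \<Phi> (x \<omega>, Kf \<omega>)" by (simp add: \<Phi>_def obs_ob)
    have i: "integrable M (\<lambda>\<omega>. (norm (A \<omega> *v (f (obs x A S \<omega>) - x \<omega>)))\<^sup>2)"
      using adm by (simp add: admissible_def matrix_vector_mult_diff_distrib)
    have "exp_msplit_loss M x A S f = (1 / real CARD('m)) * (\<integral>\<omega>. (norm (A \<omega> *v (f (obs x A S \<omega>) - x \<omega>)))\<^sup>2 \<partial>M)"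
      using loss_eq[OF adm] by (simp add: matrix_vector_mult_diff_distrib)
    also have "\<dots> = (1 / real CARD('m)) * (\<integral>\<omega>. (f (obs x A S \<omega>) - x \<omega>) \<bullet> (Qm \<omega> *v (f (obs x A S \<omega>) - x \<omega>)) \<partial>M)"
      using QI'(2)[OF Pm pe i] by simp
    finally show ?thesis by simp
  qed
  have part3: "is_global_minimizer M x A S f \<longleftrightarrow> (AE \<omega> in M. f (obs x A S \<omega>) = xh \<omega>)"
    if adm: "admissible M x A S f" and inv: "AE \<omega> in M. invertible (Qm \<omega>)" for f
  proof -
    note mc = min_char[OF adm]
    show ?thesis
    proof
      assume "is_global_minimizer M x A S f"
      then obtain v :: "'m set \<times> ((real^'m) \<times> (real^'n^'m)) \<Rightarrow> real^'n" where
        v: "AE \<omega> in M. f (obs x A S \<omega>) = (mp_pinv (Qm \<omega>) ** Qm \<omega>) *v xh \<omega> + (mat 1 - mp_pinv (Qm \<omega>) ** Qm \<omega>) *v v (obs x A S \<omega>)"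
        using mc by blast
      from v inv show "AE \<omega> in M. f (obs x A S \<omega>) = xh \<omega>"
        by eventually_elim (simp add: mp_pinv_inv[OF Qm_transpose])
    next
      assume a: "AE \<omega> in M. f (obs x A S \<omega>) = xh \<omega>"
      have z: "AE \<omega> in M. f (obs x A S \<omega>) = (mp_pinv (Qm \<omega>) ** Qm \<omega>) *v xh \<omega> + (mat 1 - mp_pinv (Qm \<omega>) ** Qm \<omega>) *v (0::real^'n)"
        using a inv by eventually_elim (simp add: mp_pinv_inv[OF Qm_transpose])
      show "is_global_minimizer M x A S f"
        unfolding mc
      proof (rule exI[where x="\<lambda>_. 0::real^'n"])
        show "AE \<omega> in M. f (obs x A S \<omega>) = (mp_pinv (Qm \<omega>) ** Qm \<omega>) *v xh \<omega> + (mat 1 - mp_pinv (Qm \<omega>) ** Qm \<omega>) *v (\<lambda>_. 0::real^'n) (obs x A S \<omega>)"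
          using z by simp
      qed
    qed
  qed
  show ?thesis
    unfolding QQ XX using part1 min_char part3 by blast
qed

end

theorem mainTheorem8:
  fixes M :: "'w measure" and x :: "'w \<Rightarrow> real^'n" and A :: "'w \<Rightarrow> real^'n^'m"
    and S :: "'w \<Rightarrow> 'm set"
  assumes "prob_space M"
    and "x \<in> borel_measurable M" and "A \<in> borel_measurable M"
    and "S \<in> measurable M (count_space UNIV)"
    and "integrable M (\<lambda>\<omega>. (norm (x \<omega>))\<^sup>2)"
    and "integrable M (\<lambda>\<omega>. norm (transpose (A \<omega>) ** A \<omega>))"
    and "indep_rv M x borel A borel"
    and "cond_indep M S (count_space UNIV) x borel (gen_sigma M A borel)"
  shows
    "(\<forall>f. admissible M x A S f \<longrightarrow>
        exp_msplit_loss M x A S f =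
        (\<integral>\<omega>. (1 / real CARD('m)) *
             ((f (obs x A S \<omega>) - x \<omega>) \<bullet> (Qmat M A S \<omega> *v (f (obs x A S \<omega>) - x \<omega>))) \<partial>M))
   \<and> (\<forall>f. admissible M x A S f \<longrightarrow>
        (is_global_minimizer M x A S f \<longleftrightarrow>
         (\<exists>v :: 'm set \<times> ((real^'m) \<times> (real^'n^'m)) \<Rightarrow> real^'n. AE \<omega> in M.
            f (obs x A S \<omega>) =
              (mp_pinv (Qmat M A S \<omega>) ** Qmat M A S \<omega>) *v vcond_exp M (F_obs M x A S) x \<omega>
            + (mat 1 - mp_pinv (Qmat M A S \<omega>) ** Qmat M A S \<omega>) *v v (obs x A S \<omega>))))
   \<and> ((AE \<omega> in M. invertible (Qmat M A S \<omega>)) \<longrightarrow>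
        (\<forall>f. admissible M x A S f \<longrightarrow>
          (is_global_minimizer M x A S f \<longleftrightarrow>
           (AE \<omega> in M. f (obs x A S \<omega>) = vcond_exp M (F_obs M x A S) x \<omega>))))"
  proof -
  interpret msetup M x A S by (rule msetup.intro[OF assms])
  show ?thesis by (rule main_loc)
qed

end
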